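(* Let $p$ be a prime, let $\mathcal{F}$ be a saturated fusion system on a finite $p$-group $S$, and let $\Omega$ be a finite $(S,S)$-biset which is $\mathcal{F}$-stable and $\mathcal{F}$-generated and which contains the $(S,S)$-biset $S$ (with $S$ acting on itself by left and right multiplication) as a sub-biset. Consider the square matrix \[ \bigl( |P\backslash \Omega /Q| \bigr)_{P,Q}, \] whose rows and columns are indexed by the $\mathcal{F}$-conjugacy classes of subgroups of $S$ and whose $(P,Q)$-entry is the number of $(P,Q)$-orbits of $\Omega$. Then the rank of this matrix (over $\mathbb{Q}$) is equal to the number of $\mathcal{F}$-conjugacy classes of cyclic subgroups of $S$.
   Context: A saturated fusion system $\mathcal{F}$ on $S$ is a category whose objects are the subgroups of $S$ and whose morphisms are injective homomorphisms, containing conjugations by elements of $S$, closed under restriction and inverses, and satisfying the Broto–Levi–Oliver saturation axioms; $P,P'\leq S$ are $\mathcal{F}$-conjugate if there is an isomorphism $P\to P'$ in $\mathcal{F}$. An $(S,S)$-biset is a finite set with commuting left and right $S$-actions, viewed as a left $S\times S$-set via $(s,t)\cdot x=sxt^{-1}$; the $(P,Q)$-orbits are the orbits of $P\times Q$. A left $S$-set $X$ is $\mathcal{F}$-stable if for every $P\leq S$ and every morphism $\varphi\colon P\to S$ in $\mathcal{F}$, the $P$-sets obtained by restricting the $S$-action along the inclusion and along $\varphi$ are isomorphic; an $(S,S)$-biset is $\mathcal{F}$-stable if it is $(\mathcal{F}\times\mathcal{F})$-stable as a left $S\times S$-set. An $(S,S)$-biset is $\mathcal{F}$-generated if all isotropy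 subgroups of the left $S\times S$-action have the form $\Delta(P,\varphi)=\{(u,\varphi(u))\mid u\in P\}$ with $P\leq S$ and $\varphi\colon P\to S$ a morphism in $\mathcal{F}$. *)

theory Defs
  imports "HOL-Algebra.Algebra"
begin

text \<open>A fusion system F on S is encoded as a set of pairs (P, phi) where P is a subgroup
of S and phi is an injective homomorphism P to S (extensional on P). A morphism P to Q in
the category sense is such a phi with phi ` P contained in Q.\<close>

definition Fmor :: "('a set \<times> ('a \<Rightarrow> 'a)) set \<Rightarrow> 'a set \<Rightarrow> ('a \<Rightarrow> 'a) \<Rightarrow> bool" where
  "Fmor F P \<phi> \<longleftrightarrow> (P, restrict \<phi> P) \<in> F"

definition conjg :: "('a, 'b) monoid_scheme \<Rightarrow> 'a \<Rightarrow> 'a \<Rightarrow> 'a" where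
  "conjg S g x = g \<otimes>\<^bsub>S\<^esub> x \<otimes>\<^bsub>S\<^esub> inv\<^bsub>S\<^esub> g"

definition fusion_system :: "('a, 'b) monoid_scheme \<Rightarrow> ('a set \<times> ('a \<Rightarrow> 'a)) set \<Rightarrow> bool" where
  "fusion_system S F \<longleftrightarrow>
     (\<forall>(P, \<phi>) \<in> F. subgroup P S \<and> \<phi> \<in> extensional P \<and>
         \<phi> \<in> hom (S\<lparr>carrier := P\<rparr>) S \<and> inj_on \<phi> P)
   \<and> (\<forall>P g. subgroup P S \<and> g \<in> carrier S \<longrightarrow> Fmor F P (conjg S g))
   \<and> (\<forall>P Q \<phi>. Fmor F P \<phi> \<and> subgroup Q S \<and> Q \<subseteq> P \<longrightarrow> Fmor F Q \<phi>)
   \<and> (\<forall>P \<phi>. Fmor F P \<phi> \<longrightarrow> Fmor F (\<phi> ` P) (inv_into P \<phi>))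
   \<and> (\<forall>P \<phi> \<psi>. Fmor F P \<phi> \<and> Fmor F (\<phi> ` P) \<psi> \<longrightarrow> Fmor F P (\<psi> \<circ> \<phi>))"

definition F_conj :: "('a set \<times> ('a \<Rightarrow> 'a)) set \<Rightarrow> 'a set \<Rightarrow> 'a set \<Rightarrow> bool" where
  "F_conj F P Q \<longleftrightarrow> (\<exists>\<phi>. Fmor F P \<phi> \<and> \<phi> ` P = Q)"

definition normalizer_in :: "('a, 'b) monoid_scheme \<Rightarrow> 'a set \<Rightarrow> 'a set" where
  "normalizer_in S P = {g \<in> carrier S. conjg S g ` P = P}"

definition centralizer_in :: "('a, 'b) monoid_scheme \<Rightarrow> 'a set \<Rightarrow> 'a set" where
  "centralizer_in S P = {g \<in> carrier S. \<forall>x \<in> P. conjg S g x = x}"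

definition fully_normalized where
  "fully_normalized S F P \<longleftrightarrow>
     (\<forall>Q. F_conj F P Q \<longrightarrow> card (normalizer_in S Q) \<le> card (normalizer_in S P))"

definition fully_centralized where
  "fully_centralized S F P \<longleftrightarrow>
     (\<forall>Q. F_conj F P Q \<longrightarrow> card (centralizer_in S Q) \<le> card (centralizer_in S P))"

definition Aut_F :: "('a set \<times> ('a \<Rightarrow> 'a)) set \<Rightarrow> 'a set \<Rightarrow> ('a \<Rightarrow> 'a) set" where
  "Aut_F F P = {restrict \<phi> P | \<phi>. Fmor F P \<phi> \<and> \<phi> ` P = P}"

definition Aut_S :: "('a, 'b) monoid_scheme \<Rightarrow> 'a set \<Rightarrow> ('a \<Rightarrow> 'a) set" where
  "Aut_S S P = {restrict (conjg S g) P | g. g \<in> normalizer_in S P}"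

text \<open>N_phi from the extension axiom: g in N_S(P) such that phi c_g phi^-1 is in Aut_S(phi(P)).\<close>
definition N_phi :: "('a, 'b) monoid_scheme \<Rightarrow> 'a set \<Rightarrow> ('a \<Rightarrow> 'a) \<Rightarrow> 'a set" where
  "N_phi S P \<phi> = {g \<in> normalizer_in S P. \<exists>h \<in> normalizer_in S (\<phi> ` P).
       \<forall>y \<in> \<phi> ` P. \<phi> (conjg S g (inv_into P \<phi> y)) = conjg S h y}"

text \<open>Saturation axioms of Broto--Levi--Oliver. The Sylow condition says that
Aut_S(P) is a Sylow p-subgroup of Aut_F(P): its order is the full p-part of the order.\<close>
definition saturated_fusion_system :: "nat \<Rightarrow> ('a, 'b) monoid_scheme \<Rightarrow> ('a set \<times> ('a \<Rightarrow> 'a)) set \<Rightarrow> bool" where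
  "saturated_fusion_system p S F \<longleftrightarrow> fusion_system S F
   \<and> (\<forall>P. subgroup P S \<and> fully_normalized S F P \<longrightarrow>
         fully_centralized S F P \<and>
         (\<exists>k. card (Aut_S S P) = p ^ k \<and> \<not> p ^ Suc k dvd card (Aut_F F P)))
   \<and> (\<forall>P \<phi>. Fmor F P \<phi> \<and> fully_centralized S F (\<phi> ` P) \<longrightarrow>
         (\<exists>\<psi>. Fmor F (N_phi S P \<phi>) \<psi> \<and> (\<forall>x \<in> P. \<psi> x = \<phi> x)))"

definition biset :: "('a, 'b) monoid_scheme \<Rightarrow> 'c set \<Rightarrow> ('a \<Rightarrow> 'c \<Rightarrow> 'c) \<Rightarrow> ('c \<Rightarrow> 'a \<Rightarrow> 'c) \<Rightarrow> bool" where
  "biset S \<Omega> l r \<longleftrightarrow>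
     (\<forall>s \<in> carrier S. \<forall>x \<in> \<Omega>. l s x \<in> \<Omega> \<and> r x s \<in> \<Omega>)
   \<and> (\<forall>x \<in> \<Omega>. l \<one>\<^bsub>S\<^esub> x = x \<and> r x \<one>\<^bsub>S\<^esub> = x)
   \<and> (\<forall>s \<in> carrier S. \<forall>t \<in> carrier S. \<forall>x \<in> \<Omega>.
        l (s \<otimes>\<^bsub>S\<^esub> t) x = l s (l t x) \<and> r x (s \<otimes>\<^bsub>S\<^esub> t) = r (r x s) t
        \<and> l s (r x t) = r (l s x) t)"

definition act2 :: "('a, 'b) monoid_scheme \<Rightarrow> ('a \<Rightarrow> 'c \<Rightarrow> 'c) \<Rightarrow> ('c \<Rightarrow> 'a \<Rightarrow> 'c) \<Rightarrow> 'a \<times> 'a \<Rightarrow> 'c \<Rightarrow> 'c" where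
  "act2 S l r st x = l (fst st) (r x (inv\<^bsub>S\<^esub> (snd st)))"

text \<open>(F x F)-stability: for every subgroup R of S x S and every morphism of F x F out of R,
i.e. a restriction to R of phi1 x phi2 with phi1, phi2 in F defined on the projections of R,
the two R-sets obtained by restriction are isomorphic.\<close>
definition biset_stable where
  "biset_stable S F \<Omega> l r \<longleftrightarrow>
     (\<forall>R \<phi>1 \<phi>2. subgroup R (S \<times>\<times> S) \<and> Fmor F (fst ` R) \<phi>1 \<and> Fmor F (snd ` R) \<phi>2 \<longrightarrow>
        (\<exists>f. bij_betw f \<Omega> \<Omega> \<and>
             (\<forall>st \<in> R. \<forall>x \<in> \<Omega>. f (act2 S l r st x) = act2 S l r (\<phi>1 (fst st), \<phi>2 (snd st)) (f x))))"

definition isotropy where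
  "isotropy S l r x = {st \<in> carrier S \<times> carrier S. act2 S l r st x = x}"

definition biset_generated where
  "biset_generated S F \<Omega> l r \<longleftrightarrow>
     (\<forall>x \<in> \<Omega>. \<exists>P \<phi>. Fmor F P \<phi> \<and> isotropy S l r x = {(u, \<phi> u) | u. u \<in> P})"

definition contains_regular_biset where
  "contains_regular_biset S \<Omega> l r \<longleftrightarrow>
     (\<exists>\<iota>. inj_on \<iota> (carrier S) \<and> \<iota> ` carrier S \<subseteq> \<Omega> \<and>
        (\<forall>s \<in> carrier S. \<forall>u \<in> carrier S. \<forall>t \<in> carrier S.
            \<iota> (s \<otimes>\<^bsub>S\<^esub> u \<otimes>\<^bsub>S\<^esub> t) = l s (r (\<iota> u) t)))"

definition num_orbits where
  "num_orbits l r \<Omega> P Q = card {{l s (r x t) | s t. s \<in> P \<and> t \<in> Q} | x. x \<in> \<Omega>}"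

definition F_class where
  "F_class F P = {Q. F_conj F P Q}"

definition F_classes where
  "F_classes S F = {F_class F P | P. subgroup P S}"

definition cyclic_subgroup where
  "cyclic_subgroup S P \<longleftrightarrow> (\<exists>g \<in> carrier S. P = generate S {g})"

definition F_cyclic_classes where
  "F_cyclic_classes S F = {F_class F P | P. subgroup P S \<and> cyclic_subgroup S P}"

definition orbit_matrix where
  "orbit_matrix l r \<Omega> A B = rat_of_nat (num_orbits l r \<Omega> (SOME P. P \<in> A) (SOME Q. Q \<in> B))"

definition rows_lin_indep :: "'i set \<Rightarrow> 'j set \<Rightarrow> ('i \<Rightarrow> 'j \<Rightarrow> rat) \<Rightarrow> bool" where
  "rows_lin_indep R J M \<longleftrightarrow>
     (\<forall>c. (\<forall>j \<in> J. (\<Sum>i \<in> R. c i * M i j) = 0) \<longrightarrow> (\<forall>i \<in> R. c i = 0))"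

definition mat_rank :: "'i set \<Rightarrow> 'j set \<Rightarrow> ('i \<Rightarrow> 'j \<Rightarrow> rat) \<Rightarrow> nat" where
  "mat_rank I J M = Max {card R | R. R \<subseteq> I \<and> rows_lin_indep R J M}"

end

theory Submission
  imports Defs "HOL-Number_Theory.Cong"
begin


lemma fs_F: "fusion_system S F \<Longrightarrow> (P, \<phi>) \<in> F \<Longrightarrow>
   subgroup P S \<and> \<phi> \<in> extensional P \<and> \<phi> \<in> hom (S\<lparr>carrier := P\<rparr>) S \<and> inj_on \<phi> P"
  unfolding fusion_system_def by (drule conjunct1) (drule bspec, assumption, simp)

lemma fmor_D:
  assumes fs: "fusion_system S F" and m: "Fmor F P \<phi>"
  shows "subgroup P S" "\<And>x. x \<in> P \<Longrightarrow> \<phi> x \<in> carrier S"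
    "\<And>x y. x \<in> P \<Longrightarrow> y \<in> P \<Longrightarrow> \<phi> (x \<otimes>\<^bsub>S\<^esub> y) = \<phi> x \<otimes>\<^bsub>S\<^esub> \<phi> y"
    "inj_on \<phi> P" "\<phi> \<in> hom (S\<lparr>carrier := P\<rparr>) S"
proof -
  have mem: "(P, restrict \<phi> P) \<in> F" using m by (simp add: Fmor_def)
  note A = fs_F[OF fs mem]
  show "subgroup P S" using A by simp
  show H: "\<phi> \<in> hom (S\<lparr>carrier := P\<rparr>) S" using A subgroup.m_closed[of P S] unfolding hom_def by (auto simp: Pi_def)
  show "\<And>x. x \<in> P \<Longrightarrow> \<phi> x \<in> carrier S" using H unfolding hom_def by (simp add: Pi_def)
  show "\<And>x y. x \<in> P \<Longrightarrow> y \<in> P \<Longrightarrow> \<phi> (x \<otimes>\<^bsub>S\<^esub> y) = \<phi> x \<otimes>\<^bsub>S\<^esub> \<phi> y"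
    using H unfolding hom_def by simp
  show "inj_on \<phi> P" using A by (simp add: inj_on_def)
qed

locale fus = group S for S :: "('a, 'b) monoid_scheme" (structure) +
  fixes F :: "('a set \<times> ('a \<Rightarrow> 'a)) set"
  assumes fs: "fusion_system S F"
begin

lemma fs_part1: "\<forall>P g. subgroup P S \<and> g \<in> carrier S \<longrightarrow> Fmor F P (conjg S g)"
  using fs unfolding fusion_system_def by (rule conjunct1[OF conjunct2])

lemma fs_part2: "\<forall>P Q \<phi>. Fmor F P \<phi> \<and> subgroup Q S \<and> Q \<subseteq> P \<longrightarrow> Fmor F Q \<phi>"
  using fs unfolding fusion_system_def by (rule conjunct1[OF conjunct2[OF conjunct2]])

lemma fs_part3: "\<forall>P \<phi>. Fmor F P \<phi> \<longrightarrow> Fmor F (\<phi> ` P) (inv_into P \<phi>)"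
  using fs unfolding fusion_system_def by (rule conjunct1[OF conjunct2[OF conjunct2[OF conjunct2]]])

lemma fs_part4: "\<forall>P \<phi> \<psi>. Fmor F P \<phi> \<and> Fmor F (\<phi> ` P) \<psi> \<longrightarrow> Fmor F P (\<psi> \<circ> \<phi>)"
  using fs unfolding fusion_system_def by (rule conjunct2[OF conjunct2[OF conjunct2[OF conjunct2]]])

lemma fmor_conjg: "subgroup P S \<Longrightarrow> g \<in> carrier S \<Longrightarrow> Fmor F P (conjg S g)"
  by (rule fs_part1[rule_format, OF conjI])

lemma fmor_restr: "Fmor F P \<phi> \<Longrightarrow> subgroup Q S \<Longrightarrow> Q \<subseteq> P \<Longrightarrow> Fmor F Q \<phi>"
  by (rule fs_part2[rule_format, OF conjI[OF _ conjI]])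

lemma fmor_inv: "Fmor F P \<phi> \<Longrightarrow> Fmor F (\<phi> ` P) (inv_into P \<phi>)"
  by (rule fs_part3[rule_format])

lemma fmor_comp: "Fmor F P \<phi> \<Longrightarrow> Fmor F (\<phi> ` P) \<psi> \<Longrightarrow> Fmor F P (\<psi> \<circ> \<phi>)"
  by (rule fs_part4[rule_format, OF conjI])

lemma conjg_one: "x \<in> carrier S \<Longrightarrow> conjg S \<one> x = x"
  unfolding conjg_def by (metis inv_one l_one one_closed r_one)

lemma fmor_id: "subgroup P S \<Longrightarrow> Fmor F P (conjg S \<one>)"
  by (rule fmor_conjg) auto

lemma conjg_one_img: "subgroup P S \<Longrightarrow> conjg S \<one> ` P = P"
proof -
  assume "subgroup P S"
  then have "P \<subseteq> carrier S" by (rule subgroup.subset)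
  then show ?thesis using conjg_one by (metis (no_types, lifting) image_cong image_ident subset_iff)
qed

lemma fconj_refl: "subgroup P S \<Longrightarrow> F_conj F P P"
  unfolding F_conj_def using fmor_id conjg_one_img by blast

lemma fconj_sym: assumes "F_conj F P Q" shows "F_conj F Q P"
proof -
  obtain \<phi> where m: "Fmor F P \<phi>" and q: "\<phi> ` P = Q" using assms unfolding F_conj_def by blast
  have "inj_on \<phi> P" using fmor_D(4)[OF fs m] .
  then have "inv_into P \<phi> ` (\<phi> ` P) = P" by (simp add: inv_into_image_cancel)
  with fmor_inv[OF m] q show ?thesis unfolding F_conj_def by blast
qed

lemma fconj_trans: assumes "F_conj F P Q" "F_conj F Q R" shows "F_conj F P R"
proof -
  obtain \<phi> where m: "Fmor F P \<phi>" and q: "\<phi> ` P = Q" using assms(1) unfolding F_conj_def by blast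
  obtain \<psi> where m2: "Fmor F Q \<psi>" and q2: "\<psi> ` Q = R" using assms(2) unfolding F_conj_def by blast
  have "Fmor F P (\<psi> \<circ> \<phi>)" using fmor_comp[OF m] m2 q by simp
  moreover have "(\<psi> \<circ> \<phi>) ` P = R" using q q2 image_image[of \<psi> \<phi> P] by (simp add: comp_def)
  ultimately show ?thesis unfolding F_conj_def by blast
qed

lemma fconj_subgroup: assumes "F_conj F P Q" shows "subgroup P S" "subgroup Q S"
proof -
  show "subgroup P S" using assms fmor_D(1)[OF fs] unfolding F_conj_def by blast
  from fconj_sym[OF assms] show "subgroup Q S" using fmor_D(1)[OF fs] unfolding F_conj_def by blast
qed

lemma fconj_card: assumes "F_conj F P Q" shows "card P = card Q"
proof -
  obtain \<phi> where m: "Fmor F P \<phi>" and q: "\<phi> ` P = Q" using assms unfolding F_conj_def by blast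
  show ?thesis using card_image[OF fmor_D(4)[OF fs m]] q by simp
qed

lemma F_class_mem: "Q \<in> F_class F P \<longleftrightarrow> F_conj F P Q"
  by (simp add: F_class_def)

lemma F_class_eq: assumes "F_conj F P Q" shows "F_class F P = F_class F Q"
  unfolding F_class_def using assms fconj_sym fconj_trans by blast

lemma F_class_self: "subgroup P S \<Longrightarrow> P \<in> F_class F P"
  using fconj_refl F_class_mem by blast

lemma F_class_eq_iff: assumes "subgroup P S" "subgroup Q S"
  shows "F_class F P = F_class F Q \<longleftrightarrow> F_conj F P Q"
  using assms F_class_eq F_class_self F_class_mem by blast

lemma gen_sub: "a \<in> carrier S \<Longrightarrow> subgroup (generate S {a}) S"
  by (rule generate_is_subgroup) simp

lemma gen_in: "subgroup P S \<Longrightarrow> a \<in> P \<Longrightarrow> generate S {a} \<subseteq> P"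
  by (rule generate_subgroup_incl) auto

lemma gen_self: "a \<in> carrier S \<Longrightarrow> a \<in> generate S {a}"
  by (rule generate.incl) simp

lemma fmor_gen: "Fmor F P \<phi> \<Longrightarrow> a \<in> P \<Longrightarrow> Fmor F (generate S {a}) \<phi>"
  by (meson fmor_D(1)[OF fs] fmor_restr gen_in gen_sub subgroup.mem_carrier)

lemma gen_img: assumes m: "Fmor F P \<phi>" and a: "a \<in> P"
  shows "\<phi> ` generate S {a} = generate S {\<phi> a}"
proof -
  have P: "subgroup P S" using fmor_D(1)[OF fs m] .
  interpret h: group_hom "S\<lparr>carrier := P\<rparr>" S \<phi>
    by (rule group_hom.intro, rule subgroup.subgroup_is_group[OF P is_group], rule is_group)
       (rule group_hom_axioms.intro, rule fmor_D(5)[OF fs m])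
  have "generate S (\<phi> ` {a}) = \<phi> ` generate (S\<lparr>carrier := P\<rparr>) {a}"
    by (rule h.generate_img) (simp add: a)
  also have "generate (S\<lparr>carrier := P\<rparr>) {a} = generate S {a}"
    by (rule generate_consistent) (use a P in auto)
  finally show ?thesis by simp
qed

end




lemma fix_card_transport:
  assumes f: "bij_betw f \<Omega> \<Omega>" and gO: "\<And>x. x \<in> \<Omega> \<Longrightarrow> g x \<in> \<Omega>"
    and c: "\<And>x. x \<in> \<Omega> \<Longrightarrow> f (g x) = h (f x)"
  shows "card {x\<in>\<Omega>. g x = x} = card {x\<in>\<Omega>. h x = x}"
proof -
  have inj: "inj_on f \<Omega>" and img: "f ` \<Omega> = \<Omega>" using f unfolding bij_betw_def by simp_all
  have "f ` {x\<in>\<Omega>. g x = x} = {x\<in>\<Omega>. h x = x}"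
  proof (intro equalityI subsetI)
    fix y assume "y \<in> f ` {x\<in>\<Omega>. g x = x}"
    then obtain x where x: "x \<in> \<Omega>" "g x = x" "y = f x" by blast
    have "y \<in> \<Omega>" using x img by (metis imageI)
    moreover have "h y = y" using c[OF x(1)] x(2,3) by metis
    ultimately show "y \<in> {x\<in>\<Omega>. h x = x}" by blast
  next
    fix y assume y: "y \<in> {x\<in>\<Omega>. h x = x}"
    have "y \<in> f ` \<Omega>" using y img by simp
    then obtain x where x: "x \<in> \<Omega>" "y = f x" by blast
    have "f (g x) = f x" using c[OF x(1)] y x(2) by (metis (mono_tags, lifting) mem_Collect_eq)
    then have "g x = x" using inj gO[OF x(1)] x(1) by (metis inj_on_eq_iff)
    then show "y \<in> f ` {x\<in>\<Omega>. g x = x}" using x by blast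
  qed
  moreover have "inj_on f {x\<in>\<Omega>. g x = x}" using inj by (rule inj_on_subset) (rule Collect_subset)
  then have "card (f ` {x\<in>\<Omega>. g x = x}) = card {x\<in>\<Omega>. g x = x}" by (rule card_image)
  ultimately show ?thesis by simp
qed

locale ctx = fus S F for S :: "('a, 'b) monoid_scheme" (structure) and F +
  fixes p :: nat and \<Omega> :: "'c set" and l :: "'a \<Rightarrow> 'c \<Rightarrow> 'c" and r :: "'c \<Rightarrow> 'a \<Rightarrow> 'c"
  assumes prime: "Factorial_Ring.prime p" and fin: "finite (carrier S)"
    and pgrp: "\<exists>n. card (carrier S) = p ^ n"
    and finO: "finite \<Omega>" and bis: "biset S \<Omega> l r"
    and stab: "biset_stable S F \<Omega> l r" and gener: "biset_generated S F \<Omega> l r"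
    and reg: "contains_regular_biset S \<Omega> l r"
begin

lemma bis1: "\<forall>s \<in> carrier S. \<forall>x \<in> \<Omega>. l s x \<in> \<Omega> \<and> r x s \<in> \<Omega>"
  using bis unfolding biset_def by (rule conjunct1)
lemma bis2: "\<forall>x \<in> \<Omega>. l \<one> x = x \<and> r x \<one> = x"
  using bis unfolding biset_def by (rule conjunct1[OF conjunct2])
lemma bis3: "\<forall>s \<in> carrier S. \<forall>t \<in> carrier S. \<forall>x \<in> \<Omega>.
        l (s \<otimes> t) x = l s (l t x) \<and> r x (s \<otimes> t) = r (r x s) t
        \<and> l s (r x t) = r (l s x) t"
  using bis unfolding biset_def by (rule conjunct2[OF conjunct2])

lemma l_cl: "s \<in> carrier S \<Longrightarrow> x \<in> \<Omega> \<Longrightarrow> l s x \<in> \<Omega>" using bis1 by blast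
lemma r_cl: "s \<in> carrier S \<Longrightarrow> x \<in> \<Omega> \<Longrightarrow> r x s \<in> \<Omega>" using bis1 by blast
lemma l_mult: "s \<in> carrier S \<Longrightarrow> t \<in> carrier S \<Longrightarrow> x \<in> \<Omega> \<Longrightarrow> l (s \<otimes> t) x = l s (l t x)"
  using bis3 by blast
lemma r_mult: "s \<in> carrier S \<Longrightarrow> t \<in> carrier S \<Longrightarrow> x \<in> \<Omega> \<Longrightarrow> r x (s \<otimes> t) = r (r x s) t"
  using bis3 by blast
lemma lr_comm: "s \<in> carrier S \<Longrightarrow> t \<in> carrier S \<Longrightarrow> x \<in> \<Omega> \<Longrightarrow> l s (r x t) = r (l s x) t"
  using bis3 by blast

lemma act2_cl: "a \<in> carrier S \<Longrightarrow> b \<in> carrier S \<Longrightarrow> x \<in> \<Omega> \<Longrightarrow> act2 S l r (a, b) x \<in> \<Omega>"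
  unfolding act2_def by (simp add: l_cl r_cl)

lemma act2_mult:
  assumes "a \<in> carrier S" "b \<in> carrier S" "a' \<in> carrier S" "b' \<in> carrier S" "x \<in> \<Omega>"
  shows "act2 S l r (a \<otimes> a', b \<otimes> b') x = act2 S l r (a, b) (act2 S l r (a', b') x)"
proof -
  have "inv (b \<otimes> b') = inv b' \<otimes> inv b" using assms by (simp add: inv_mult_group)
  then have "act2 S l r (a \<otimes> a', b \<otimes> b') x = l a (l a' (r (r x (inv b')) (inv b)))"
    unfolding act2_def using assms by (simp add: l_mult r_mult r_cl)
  also have "\<dots> = l a (r (l a' (r x (inv b'))) (inv b))"
    using assms by (simp add: lr_comm r_cl)
  finally show ?thesis unfolding act2_def by simp
qed

definition Fixset where "Fixset a b = {x \<in> \<Omega>. act2 S l r (a, b) x = x}"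
definition fx where "fx a b = card (Fixset a b)"

lemma fix_pow_sub:
  assumes a: "a \<in> carrier S" and b: "b \<in> carrier S"
  shows "Fixset a b \<subseteq> Fixset (a [^] (k::nat)) (b [^] k)"
proof
  fix x assume x: "x \<in> Fixset a b"
  then have xO: "x \<in> \<Omega>" and fx: "act2 S l r (a, b) x = x" by (auto simp: Fixset_def)
  have "act2 S l r (a [^] k, b [^] k) x = x"
  proof (induction k)
    case 0
    show ?case using xO bis2 unfolding act2_def by simp
  next
    case (Suc k)
    have "act2 S l r (a [^] Suc k, b [^] Suc k) x = act2 S l r (a [^] k \<otimes> a, b [^] k \<otimes> b) x"
      by simp
    also have "\<dots> = act2 S l r (a [^] k, b [^] k) (act2 S l r (a, b) x)"
      by (rule act2_mult) (use a b xO in auto)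
    finally show ?case using fx Suc by simp
  qed
  then show "x \<in> Fixset (a [^] k) (b [^] k)" using xO by (simp add: Fixset_def)
qed

lemma pow_mod_order: assumes a: "a \<in> carrier S" shows "a [^] (m::nat) = a [^] (m mod order S)"
proof -
  have "a [^] m = a [^] (order S * (m div order S) + m mod order S)" by simp
  also have "\<dots> = (a [^] order S) [^] (m div order S) \<otimes> a [^] (m mod order S)"
    using a by (simp add: nat_pow_mult nat_pow_pow)
  also have "\<dots> = a [^] (m mod order S)" using a by (simp add: pow_order_eq_1)
  finally show ?thesis .
qed

lemma modinv: assumes "coprime k (order S)"
  shows "\<exists>k'. \<forall>a \<in> carrier S. (a [^] (k::nat)) [^] (k'::nat) = a"
proof -
  obtain k' :: nat where c: "[k * k' = 1] (mod order S)" using cong_solve_coprime_nat[OF assms] by auto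
  have "(a [^] k) [^] k' = a" if a: "a \<in> carrier S" for a
  proof -
    have "(a [^] k) [^] k' = a [^] (k * k')" using a by (simp add: nat_pow_pow)
    also have "\<dots> = a [^] ((k * k') mod order S)" by (rule pow_mod_order[OF a])
    also have "\<dots> = a [^] (1 mod order S)" using c by (simp add: cong_def)
    also have "\<dots> = a"
    proof (cases "order S = 1")
      case True
      then have "carrier S = {\<one>}" unfolding order_def by (metis card_1_singletonE one_closed singletonD)
      then show ?thesis using a True by simp
    next
      case False
      then show ?thesis using a by simp
    qed
    finally show ?thesis .
  qed
  then show ?thesis by blast
qed

lemma fix_pow_eq:
  assumes a: "a \<in> carrier S" and b: "b \<in> carrier S" and k: "coprime k (order S)"
  shows "Fixset (a [^] (k::nat)) (b [^] k) = Fixset a b"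
proof
  show "Fixset a b \<subseteq> Fixset (a [^] k) (b [^] k)" by (rule fix_pow_sub[OF a b])
  obtain k' where k': "\<forall>a \<in> carrier S. (a [^] k) [^] (k'::nat) = a" using modinv[OF k] by blast
  have "Fixset (a [^] k) (b [^] k) \<subseteq> Fixset ((a [^] k) [^] k') ((b [^] k) [^] k')"
    by (rule fix_pow_sub) (use a b in simp_all)
  then show "Fixset (a [^] k) (b [^] k) \<subseteq> Fixset a b" using k' a b by simp
qed

lemma fx_pow: "a \<in> carrier S \<Longrightarrow> b \<in> carrier S \<Longrightarrow> coprime k (order S) \<Longrightarrow>
   fx (a [^] (k::nat)) (b [^] k) = fx a b"
  unfolding fx_def by (simp add: fix_pow_eq)

lemma sub_pow_closed: assumes Q: "subgroup Q S" shows "b \<in> Q \<Longrightarrow> b [^] (m::nat) \<in> Q"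
proof (induction m)
  case 0
  show ?case by (subst nat_pow_0) (rule subgroup.one_closed[OF Q])
next
  case (Suc m)
  have "b [^] Suc m = b [^] m \<otimes> b" by (rule nat_pow_Suc)
  then show ?case using subgroup.m_closed[OF Q Suc.IH[OF Suc.prems] Suc.prems] by simp
qed

lemma bij_pow: assumes Q: "subgroup Q S" and k: "coprime k (order S)"
  shows "bij_betw (\<lambda>b. b [^] (k::nat)) Q Q"
proof -
  obtain k' where k': "\<forall>a \<in> carrier S. (a [^] k) [^] (k'::nat) = a" using modinv[OF k] by blast
  have sub: "Q \<subseteq> carrier S" using Q by (rule subgroup.subset)
  have cl: "\<And>b m. b \<in> Q \<Longrightarrow> b [^] (m::nat) \<in> Q" using Q by (rule sub_pow_closed)
  show ?thesis
  proof (rule bij_betw_byWitness[where f'="\<lambda>b. b [^] k'"])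
    show "\<forall>a\<in>Q. (a [^] k) [^] k' = a" using k' sub by blast
    show "\<forall>a'\<in>Q. (a' [^] k') [^] k = a'"
    proof
      fix a assume a: "a \<in> Q"
      then have ac: "a \<in> carrier S" using sub by blast
      have "(a [^] k') [^] k = a [^] (k' * k)" using ac by (simp add: nat_pow_pow)
      also have "\<dots> = a [^] (k * k')" by (simp add: mult.commute)
      also have "\<dots> = a" using k' ac by (simp add: nat_pow_pow)
      finally show "(a [^] k') [^] k = a" .
    qed
    show "(\<lambda>b. b [^] k) ` Q \<subseteq> Q" using cl by blast
    show "(\<lambda>b. b [^] k') ` Q \<subseteq> Q" using cl by blast
  qed
qed

end



context ctx begin

lemma fx_F_left:
  assumes a: "a \<in> carrier S" and b: "b \<in> carrier S" and m: "Fmor F (generate S {a}) \<phi>"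
  shows "fx (\<phi> a) b = fx a b"
proof -
  define R where "R = generate S {a} \<times> generate S {b}"
  have sR: "subgroup R (S \<times>\<times> S)" unfolding R_def
    by (rule DirProd_subgroups[OF is_group gen_sub[OF a] is_group gen_sub[OF b]])
  have bb: "b \<in> generate S {b}" by (rule gen_self[OF b])
  have aa: "a \<in> generate S {a}" by (rule gen_self[OF a])
  have fR: "fst ` R = generate S {a}" unfolding R_def using bb by (metis empty_iff fst_image_times)
  have sndR: "snd ` R = generate S {b}" unfolding R_def using aa by (metis empty_iff snd_image_times)
  have m2: "Fmor F (snd ` R) (conjg S \<one>)" unfolding sndR by (rule fmor_id[OF gen_sub[OF b]])
  have m1: "Fmor F (fst ` R) \<phi>" unfolding fR by (rule m)
  obtain f where f: "bij_betw f \<Omega> \<Omega>" and H: "\<forall>st \<in> R. \<forall>x \<in> \<Omega>.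
      f (act2 S l r st x) = act2 S l r (\<phi> (fst st), conjg S \<one> (snd st)) (f x)"
    using stab[unfolded biset_stable_def, rule_format, OF conjI[OF sR conjI[OF m1 m2]]] by blast
  have abR: "(a, b) \<in> R" unfolding R_def using aa bb by blast
  have cb: "conjg S \<one> b = b" by (rule conjg_one[OF b])
  have "card {x\<in>\<Omega>. act2 S l r (a, b) x = x} = card {x\<in>\<Omega>. act2 S l r (\<phi> a, b) x = x}"
  proof (rule fix_card_transport[OF f])
    show "\<And>x. x \<in> \<Omega> \<Longrightarrow> act2 S l r (a, b) x \<in> \<Omega>" by (rule act2_cl[OF a b])
    show "\<And>x. x \<in> \<Omega> \<Longrightarrow> f (act2 S l r (a, b) x) = act2 S l r (\<phi> a, b) (f x)"
      using H abR cb by fastforce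
  qed
  then show ?thesis unfolding fx_def Fixset_def by simp
qed

lemma fx_F_right:
  assumes a: "a \<in> carrier S" and b: "b \<in> carrier S" and m: "Fmor F (generate S {b}) \<psi>"
  shows "fx a (\<psi> b) = fx a b"
proof -
  define R where "R = generate S {a} \<times> generate S {b}"
  have sR: "subgroup R (S \<times>\<times> S)" unfolding R_def
    by (rule DirProd_subgroups[OF is_group gen_sub[OF a] is_group gen_sub[OF b]])
  have bb: "b \<in> generate S {b}" by (rule gen_self[OF b])
  have aa: "a \<in> generate S {a}" by (rule gen_self[OF a])
  have fR: "fst ` R = generate S {a}" unfolding R_def using bb by (metis empty_iff fst_image_times)
  have sndR: "snd ` R = generate S {b}" unfolding R_def using aa by (metis empty_iff snd_image_times)
  have m1: "Fmor F (fst ` R) (conjg S \<one>)" unfolding fR by (rule fmor_id[OF gen_sub[OF a]])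
  have m2: "Fmor F (snd ` R) \<psi>" unfolding sndR by (rule m)
  obtain f where f: "bij_betw f \<Omega> \<Omega>" and H: "\<forall>st \<in> R. \<forall>x \<in> \<Omega>.
      f (act2 S l r st x) = act2 S l r (conjg S \<one> (fst st), \<psi> (snd st)) (f x)"
    using stab[unfolded biset_stable_def, rule_format, OF conjI[OF sR conjI[OF m1 m2]]] by blast
  have abR: "(a, b) \<in> R" unfolding R_def using aa bb by blast
  have ca: "conjg S \<one> a = a" by (rule conjg_one[OF a])
  have "card {x\<in>\<Omega>. act2 S l r (a, b) x = x} = card {x\<in>\<Omega>. act2 S l r (a, \<psi> b) x = x}"
  proof (rule fix_card_transport[OF f])
    show "\<And>x. x \<in> \<Omega> \<Longrightarrow> act2 S l r (a, b) x \<in> \<Omega>" by (rule act2_cl[OF a b])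
    show "\<And>x. x \<in> \<Omega> \<Longrightarrow> f (act2 S l r (a, b) x) = act2 S l r (a, \<psi> b) (f x)"
      using H abR ca by fastforce
  qed
  then show ?thesis unfolding fx_def Fixset_def by simp
qed

definition cl where "cl a = F_class F (generate S {a})"

lemma pow_in_gen: "a \<in> carrier S \<Longrightarrow> a [^] (k::nat) \<in> generate S {a}"
  by (rule sub_pow_closed[OF gen_sub gen_self])

lemma gen_pow_eq: assumes a: "a \<in> carrier S" and k: "coprime k (order S)"
  shows "generate S {a [^] (k::nat)} = generate S {a}"
proof
  show "generate S {a [^] k} \<subseteq> generate S {a}" by (rule gen_in[OF gen_sub[OF a] pow_in_gen[OF a]])
  obtain k' where k': "\<forall>a \<in> carrier S. (a [^] k) [^] (k'::nat) = a" using modinv[OF k] by blast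
  have ak: "a [^] k \<in> carrier S" using a by simp
  have "(a [^] k) [^] k' \<in> generate S {a [^] k}" by (rule pow_in_gen[OF ak])
  then have "a \<in> generate S {a [^] k}" using k' a by simp
  then show "generate S {a} \<subseteq> generate S {a [^] k}" by (rule gen_in[OF gen_sub[OF ak]])
qed

lemma cl_pow: "a \<in> carrier S \<Longrightarrow> coprime k (order S) \<Longrightarrow> cl (a [^] (k::nat)) = cl a"
  unfolding cl_def by (simp add: gen_pow_eq)

lemma cl_fmor: assumes m: "Fmor F P \<phi>" and a: "a \<in> P" shows "cl (\<phi> a) = cl a"
proof -
  have "F_conj F (generate S {a}) (generate S {\<phi> a})"
    unfolding F_conj_def using fmor_gen[OF m a] gen_img[OF m a] by blast
  then show ?thesis unfolding cl_def by (simp add: F_class_eq)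
qed

lemma order_eq: "\<exists>n. order S = p ^ n" using pgrp unfolding order_def .

lemma cl_same:
  assumes a: "a \<in> carrier S" and a': "a' \<in> carrier S" and c: "cl a = cl a'"
  shows "\<exists>\<phi> k. Fmor F (generate S {a}) \<phi> \<and> coprime k (order S) \<and> a' = (\<phi> a) [^] (k::nat)"
proof -
  have "F_conj F (generate S {a}) (generate S {a'})"
    using c unfolding cl_def using F_class_eq_iff[OF gen_sub[OF a] gen_sub[OF a']] by simp
  then obtain \<phi> where m: "Fmor F (generate S {a}) \<phi>" and im: "\<phi> ` generate S {a} = generate S {a'}"
    unfolding F_conj_def by blast
  have aa: "a \<in> generate S {a}" by (rule gen_self[OF a])
  define z where "z = \<phi> a"
  have z: "z \<in> carrier S" unfolding z_def by (rule fmor_D(2)[OF fs m aa])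
  have gz: "generate S {z} = generate S {a'}" using gen_img[OF m aa] im unfolding z_def by simp
  have "a' \<in> generate S {z}" using gz gen_self[OF a'] by simp
  then obtain j :: nat where j: "a' = z [^] j" using generate_pow_on_finite_carrier[OF fin z] by blast
  have "z \<in> generate S {a'}" using gz gen_self[OF z] by simp
  then obtain i :: nat where i: "z = a' [^] i" using generate_pow_on_finite_carrier[OF fin a'] by blast
  have zz: "z [^] (j * i) = z" using i j z by (simp add: nat_pow_pow)
  obtain n where n: "order S = p ^ n" using order_eq by blast
  show ?thesis
  proof (cases "p dvd j")
    case False
    have "coprime p j" using prime False by (rule prime_imp_coprime)
    then have "coprime j (p ^ n)" by (simp add: coprime_commute)
    then have "coprime j (order S)" using n by simp
    then show ?thesis using m j unfolding z_def by blast
  next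
    case True
    have it: "z [^] ((j * i) ^ N) = z" for N
    proof (induction N)
      case 0 then show ?case using z by simp
    next
      case (Suc N)
      have "z [^] ((j * i) ^ Suc N) = (z [^] ((j * i) ^ N)) [^] (j * i)"
        using z by (simp add: nat_pow_pow mult.commute)
      then show ?case using Suc zz by simp
    qed
    have "p ^ n dvd (j * i) ^ n" using True by (simp add: dvd_power_same)
    then obtain q where q: "(j * i) ^ n = p ^ n * q" by blast
    have "z = z [^] ((j * i) ^ n)" using it by simp
    also have "\<dots> = (z [^] order S) [^] q" using z q n by (simp add: nat_pow_pow)
    also have "\<dots> = \<one>" using z by (simp add: pow_order_eq_1)
    finally have z1: "z = \<one>" .
    then have "a' = z [^] (1::nat)" using j by simp
    moreover have "coprime (1::nat) (order S)" by simp
    ultimately show ?thesis using m unfolding z_def by blast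
  qed
qed

end



context ctx begin

definition actB where "actB g = (\<lambda>x\<in>\<Omega>. act2 S l r g x)"

lemma act2_one: "x \<in> \<Omega> \<Longrightarrow> act2 S l r (\<one>, \<one>) x = x"
  unfolding act2_def using bis2 by simp

lemma act2_inv: assumes "s \<in> carrier S" "t \<in> carrier S" "x \<in> \<Omega>"
  shows "act2 S l r (inv s, inv t) (act2 S l r (s, t) x) = x"
proof -
  have "act2 S l r (inv s, inv t) (act2 S l r (s, t) x) = act2 S l r (inv s \<otimes> s, inv t \<otimes> t) x"
    using assms by (intro act2_mult[symmetric]) simp_all
  also have "\<dots> = x" using assms by (simp add: act2_one)
  finally show ?thesis .
qed

lemma actB_bij: assumes "s \<in> carrier S" "t \<in> carrier S" shows "actB (s, t) \<in> Bij \<Omega>"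
proof -
  have "bij_betw (act2 S l r (s, t)) \<Omega> \<Omega>"
  proof (rule bij_betw_byWitness[where f'="act2 S l r (inv s, inv t)"])
    show "\<forall>a\<in>\<Omega>. act2 S l r (inv s, inv t) (act2 S l r (s, t) a) = a"
      using assms act2_inv by blast
    show "\<forall>a'\<in>\<Omega>. act2 S l r (s, t) (act2 S l r (inv s, inv t) a') = a'"
      using assms act2_inv[of "inv s" "inv t"] by simp
    show "act2 S l r (s, t) ` \<Omega> \<subseteq> \<Omega>" using assms act2_cl by blast
    show "act2 S l r (inv s, inv t) ` \<Omega> \<subseteq> \<Omega>" using assms act2_cl[of "inv s" "inv t"] by auto
  qed
  then have "bij_betw (actB (s,t)) \<Omega> \<Omega>" unfolding actB_def
    by (rule bij_betw_cong[THEN iffD1, rotated]) simp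
  then show ?thesis unfolding Bij_def actB_def by simp
qed

lemma burnside_link:
  assumes P: "subgroup P S" and Q: "subgroup Q S"
  shows "num_orbits l r \<Omega> P Q * (card P * card Q) = (\<Sum>a\<in>P. \<Sum>b\<in>Q. fx a b)"
proof -
  define G where "G = (S \<times>\<times> S)\<lparr>carrier := P \<times> Q\<rparr>"
  have sR: "subgroup (P \<times> Q) (S \<times>\<times> S)"
    by (rule DirProd_subgroups[OF is_group P is_group Q])
  have gG: "group G" unfolding G_def
    by (rule subgroup.subgroup_is_group[OF sR DirProd_group[OF is_group is_group]])
  have Ps: "P \<subseteq> carrier S" using P by (rule subgroup.subset)
  have Qs: "Q \<subseteq> carrier S" using Q by (rule subgroup.subset)
  have cG: "carrier G = P \<times> Q" unfolding G_def by simp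
  have hom: "actB \<in> hom G (BijGroup \<Omega>)"
  proof (rule homI)
    fix g assume "g \<in> carrier G"
    then obtain s t where g: "g = (s, t)" "s \<in> P" "t \<in> Q" using cG by auto
    then show "actB g \<in> carrier (BijGroup \<Omega>)" using actB_bij Ps Qs
      unfolding BijGroup_def by auto
  next
    fix g h assume g: "g \<in> carrier G" and h: "h \<in> carrier G"
    obtain s t where gg0: "g = (s, t)" "s \<in> P" "t \<in> Q" using g cG by auto
    then have gg: "g = (s, t)" "s \<in> carrier S" "t \<in> carrier S" using Ps Qs by blast+
    obtain s' t' where hh0: "h = (s', t')" "s' \<in> P" "t' \<in> Q" using h cG by auto
    then have hh: "h = (s', t')" "s' \<in> carrier S" "t' \<in> carrier S" using Ps Qs by blast+
    have bg: "actB g \<in> Bij \<Omega>" and bh: "actB h \<in> Bij \<Omega>" using gg hh actB_bij by auto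
    have "g \<otimes>\<^bsub>G\<^esub> h = (s \<otimes> s', t \<otimes> t')" unfolding G_def using gg hh by simp
    then have "actB (g \<otimes>\<^bsub>G\<^esub> h) = (\<lambda>x\<in>\<Omega>. act2 S l r (s, t) (act2 S l r (s', t') x))"
      unfolding actB_def using gg hh by (auto simp: act2_mult)
    also have "\<dots> = actB g \<otimes>\<^bsub>BijGroup \<Omega>\<^esub> actB h"
      using bg bh gg(2,3) hh(2,3) unfolding BijGroup_def compose_def actB_def gg(1) hh(1)
      by (auto simp: act2_cl intro!: restrict_ext)
    finally show "actB (g \<otimes>\<^bsub>G\<^esub> h) = actB g \<otimes>\<^bsub>BijGroup \<Omega>\<^esub> actB h" .
  qed
  interpret ga: group_action G \<Omega> actB
    unfolding group_action_def group_hom_def group_hom_axioms_def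
    using gG group_BijGroup hom by blast
  have finG: "finite (carrier G)" using cG fin Ps Qs
    by (metis finite_SigmaI finite_subset)
  have B: "card (orbits G \<Omega> actB) * order G = (\<Sum>g \<in> carrier G. card (invariants \<Omega> actB g))"
    by (rule ga.burnside[OF finG finO])
  have ord: "order G = card P * card Q" unfolding order_def cG by (simp add: card_cartesian_product)
  have inv: "invariants \<Omega> actB (a, b) = Fixset a b" for a b
    unfolding invariants_def Fixset_def actB_def by auto
  have sum: "(\<Sum>g \<in> carrier G. card (invariants \<Omega> actB g)) = (\<Sum>a\<in>P. \<Sum>b\<in>Q. fx a b)"
    unfolding cG fx_def inv[symmetric] by (simp add: sum.cartesian_product)
  have orb: "orbit G actB x = {l s (r x t) | s t. s \<in> P \<and> t \<in> Q}" if x: "x \<in> \<Omega>" for x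
  proof (intro equalityI subsetI)
    fix y assume "y \<in> orbit G actB x"
    then obtain s t where st: "s \<in> P" "t \<in> Q" "y = actB (s, t) x" unfolding orbit_def cG by auto
    have "inv t \<in> Q" using Q st(2) by (rule subgroup.m_inv_closed)
    moreover have "y = l s (r x (inv t))" using st x unfolding actB_def act2_def by simp
    ultimately show "y \<in> {l s (r x t) | s t. s \<in> P \<and> t \<in> Q}" using st by blast
  next
    fix y assume "y \<in> {l s (r x t) | s t. s \<in> P \<and> t \<in> Q}"
    then obtain s t where st: "s \<in> P" "t \<in> Q" "y = l s (r x t)" by blast
    have ti: "inv t \<in> Q" using Q st(2) by (rule subgroup.m_inv_closed)
    have "t \<in> carrier S" using st Qs by blast
    then have "y = actB (s, inv t) x" using st x unfolding actB_def act2_def by simp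
    then show "y \<in> orbit G actB x" using st ti unfolding orbit_def cG by blast
  qed
  have "orbits G \<Omega> actB = {{l s (r x t) | s t. s \<in> P \<and> t \<in> Q} | x. x \<in> \<Omega>}"
    unfolding orbits_def using orb by blast
  then have "card (orbits G \<Omega> actB) = num_orbits l r \<Omega> P Q" unfolding num_orbits_def by simp
  then show ?thesis using B ord sum by simp
qed

end



context ctx begin

definition Bl :: "'a \<Rightarrow> ('a \<Rightarrow> rat) \<Rightarrow> rat" where
  "Bl a v = (\<Sum>b\<in>carrier S. v b * of_nat (fx a b))"
definition Br :: "('a \<Rightarrow> rat) \<Rightarrow> 'a \<Rightarrow> rat" where
  "Br u b = (\<Sum>a\<in>carrier S. u a * of_nat (fx a b))"
definition Bf :: "('a \<Rightarrow> rat) \<Rightarrow> ('a \<Rightarrow> rat) \<Rightarrow> rat" where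
  "Bf u v = (\<Sum>a\<in>carrier S. \<Sum>b\<in>carrier S. u a * v b * of_nat (fx a b))"
definition ind :: "'a set \<Rightarrow> 'a \<Rightarrow> rat" where
  "ind P a = (if a \<in> P then 1 else 0)"
definition PI :: "('a \<Rightarrow> rat) \<Rightarrow> bool" where
  "PI u \<longleftrightarrow> (\<forall>a\<in>carrier S. \<forall>k::nat. coprime k (order S) \<longrightarrow> u (a [^] k) = u a)"

lemma Bf_l: "Bf u v = (\<Sum>a\<in>carrier S. u a * Bl a v)"
  unfolding Bf_def Bl_def by (simp add: sum_distrib_left mult.assoc)

lemma Bf_r: "Bf u v = (\<Sum>b\<in>carrier S. v b * Br u b)"
  unfolding Bf_def Br_def by (subst sum.swap) (simp add: sum_distrib_left mult.assoc mult.left_commute)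

lemma carrier_sub: "subgroup (carrier S) S" by (rule subgroup_self)

lemma Bl_cl:
  assumes v: "PI v" and a: "a \<in> carrier S" and a': "a' \<in> carrier S" and c: "cl a = cl a'"
  shows "Bl a' v = Bl a v"
proof -
  obtain \<phi> k where m: "Fmor F (generate S {a}) \<phi>" and k: "coprime k (order S)"
    and e: "a' = (\<phi> a) [^] (k::nat)" using cl_same[OF a a' c] by blast
  have z: "\<phi> a \<in> carrier S" by (rule fmor_D(2)[OF fs m gen_self[OF a]])
  have bij: "bij_betw (\<lambda>b. b [^] k) (carrier S) (carrier S)" by (rule bij_pow[OF carrier_sub k])
  have "Bl a' v = (\<Sum>b\<in>carrier S. v (b [^] k) * of_nat (fx a' (b [^] k)))"
    unfolding Bl_def by (rule sum.reindex_bij_betw[OF bij, symmetric])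
  also have "\<dots> = (\<Sum>b\<in>carrier S. v b * of_nat (fx (\<phi> a) b))"
    by (rule sum.cong[OF refl]) (use v k z in \<open>simp add: e PI_def fx_pow\<close>)
  also have "\<dots> = Bl a v" unfolding Bl_def
    by (rule sum.cong[OF refl]) (simp add: fx_F_left[OF a _ m])
  finally show ?thesis .
qed

lemma Br_cl:
  assumes u: "PI u" and b: "b \<in> carrier S" and b': "b' \<in> carrier S" and c: "cl b = cl b'"
  shows "Br u b' = Br u b"
proof -
  obtain \<psi> k where m: "Fmor F (generate S {b}) \<psi>" and k: "coprime k (order S)"
    and e: "b' = (\<psi> b) [^] (k::nat)" using cl_same[OF b b' c] by blast
  have z: "\<psi> b \<in> carrier S" by (rule fmor_D(2)[OF fs m gen_self[OF b]])
  have bij: "bij_betw (\<lambda>b. b [^] k) (carrier S) (carrier S)" by (rule bij_pow[OF carrier_sub k])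
  have "Br u b' = (\<Sum>a\<in>carrier S. u (a [^] k) * of_nat (fx (a [^] k) b'))"
    unfolding Br_def by (rule sum.reindex_bij_betw[OF bij, symmetric])
  also have "\<dots> = (\<Sum>a\<in>carrier S. u a * of_nat (fx a (\<psi> b)))"
    by (rule sum.cong[OF refl]) (use u k z in \<open>simp add: e PI_def fx_pow\<close>)
  also have "\<dots> = Br u b" unfolding Br_def
    by (rule sum.cong[OF refl]) (simp add: fx_F_right[OF _ b m])
  finally show ?thesis .
qed

lemma PI_ind: assumes P: "subgroup P S" shows "PI (ind P)"
  unfolding PI_def
proof (intro ballI allI impI)
  fix a and k :: nat assume a: "a \<in> carrier S" and k: "coprime k (order S)"
  obtain k' where k': "\<forall>a \<in> carrier S. (a [^] k) [^] (k'::nat) = a" using modinv[OF k] by blast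
  have "a [^] k \<in> P \<longleftrightarrow> a \<in> P"
  proof
    assume "a [^] k \<in> P"
    then have "(a [^] k) [^] k' \<in> P" by (rule sub_pow_closed[OF P])
    then show "a \<in> P" using k' a by simp
  next
    assume "a \<in> P" then show "a [^] k \<in> P" by (rule sub_pow_closed[OF P])
  qed
  then show "ind P (a [^] k) = ind P a" unfolding ind_def by simp
qed

lemma PI_cl: assumes "\<And>a a'. a \<in> carrier S \<Longrightarrow> a' \<in> carrier S \<Longrightarrow> cl a = cl a' \<Longrightarrow> w a = w a'"
  shows "PI w"
  unfolding PI_def using assms cl_pow by (metis nat_pow_closed)

lemma PI_sum: assumes "\<And>i. i \<in> I \<Longrightarrow> PI (f i)" shows "PI (\<lambda>a. \<Sum>i\<in>I. c i * f i a)"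
  using assms unfolding PI_def by simp

definition CC where "CC = cl ` carrier S"
definition T where "T c = {a \<in> carrier S. cl a = c}"
definition rep where "rep c = (SOME a. a \<in> carrier S \<and> cl a = c)"

lemma finCC: "finite CC" unfolding CC_def using fin by simp

lemma rep: assumes "c \<in> CC" shows "rep c \<in> carrier S" "cl (rep c) = c"
proof -
  have "\<exists>a. a \<in> carrier S \<and> cl a = c" using assms unfolding CC_def by blast
  then have "rep c \<in> carrier S \<and> cl (rep c) = c" unfolding rep_def by (rule someI_ex)
  then show "rep c \<in> carrier S" "cl (rep c) = c" by simp_all
qed

lemma group_sum: "(\<Sum>a\<in>carrier S. h a) = (\<Sum>c\<in>CC. \<Sum>a\<in>T c. h a)"
  unfolding T_def CC_def by (rule sum.group[symmetric]) (use fin in auto)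

lemma GL: assumes v: "PI v" shows "Bf u v = (\<Sum>c\<in>CC. (\<Sum>a\<in>T c. u a) * Bl (rep c) v)"
proof -
  have "Bf u v = (\<Sum>c\<in>CC. \<Sum>a\<in>T c. u a * Bl a v)" unfolding Bf_l by (rule group_sum)
  also have "\<dots> = (\<Sum>c\<in>CC. \<Sum>a\<in>T c. u a * Bl (rep c) v)"
  proof (rule sum.cong[OF refl], rule sum.cong[OF refl])
    fix c a assume c: "c \<in> CC" and a: "a \<in> T c"
    then have "a \<in> carrier S" "cl a = c" unfolding T_def by auto
    then have "Bl a v = Bl (rep c) v" using Bl_cl[OF v rep(1)[OF c]] rep(2)[OF c] by metis
    then show "u a * Bl a v = u a * Bl (rep c) v" by simp
  qed
  also have "\<dots> = (\<Sum>c\<in>CC. (\<Sum>a\<in>T c. u a) * Bl (rep c) v)" by (simp add: sum_distrib_right)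
  finally show ?thesis .
qed

lemma GR: assumes u: "PI u" shows "Bf u v = (\<Sum>c\<in>CC. (\<Sum>b\<in>T c. v b) * Br u (rep c))"
proof -
  have "Bf u v = (\<Sum>c\<in>CC. \<Sum>b\<in>T c. v b * Br u b)" unfolding Bf_r by (rule group_sum)
  also have "\<dots> = (\<Sum>c\<in>CC. \<Sum>b\<in>T c. v b * Br u (rep c))"
  proof (rule sum.cong[OF refl], rule sum.cong[OF refl])
    fix c b assume c: "c \<in> CC" and b: "b \<in> T c"
    then have "b \<in> carrier S" "cl b = c" unfolding T_def by auto
    then have "Br u b = Br u (rep c)" using Br_cl[OF u rep(1)[OF c]] rep(2)[OF c] by metis
    then show "v b * Br u b = v b * Br u (rep c)" by simp
  qed
  also have "\<dots> = (\<Sum>c\<in>CC. (\<Sum>b\<in>T c. v b) * Br u (rep c))" by (simp add: sum_distrib_right)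
  finally show ?thesis .
qed

end



context ctx begin

lemma fx_sum: "(of_nat (fx a b) :: rat) = (\<Sum>x\<in>\<Omega>. if act2 S l r (a, b) x = x then 1 else 0)"
proof -
  have "(of_nat (fx a b) :: rat) = (\<Sum>x\<in>{x\<in>\<Omega>. act2 S l r (a, b) x = x}. 1)"
    unfolding fx_def Fixset_def by simp
  also have "\<dots> = (\<Sum>x\<in>\<Omega>. if act2 S l r (a, b) x = x then 1 else 0)"
    by (rule sum.inter_filter[OF finO])
  finally show ?thesis .
qed

definition K :: "('a \<Rightarrow> rat) \<Rightarrow> 'c \<Rightarrow> rat" where
  "K w x = (\<Sum>a\<in>carrier S. \<Sum>b\<in>carrier S. if act2 S l r (a, b) x = x then w a * w b else 0)"

lemma Bf_K: "Bf w w = (\<Sum>x\<in>\<Omega>. K w x)"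
proof -
  have "Bf w w = (\<Sum>a\<in>carrier S. \<Sum>b\<in>carrier S. \<Sum>x\<in>\<Omega>. if act2 S l r (a, b) x = x then w a * w b else 0)"
    unfolding Bf_def fx_sum by (simp add: sum_distrib_left if_distrib cong: if_cong)
  also have "\<dots> = (\<Sum>a\<in>carrier S. \<Sum>x\<in>\<Omega>. \<Sum>b\<in>carrier S. if act2 S l r (a, b) x = x then w a * w b else 0)"
    by (rule sum.cong[OF refl], rule sum.swap)
  also have "\<dots> = (\<Sum>x\<in>\<Omega>. K w x)" unfolding K_def by (rule sum.swap)
  finally show ?thesis .
qed

lemma K_nonneg:
  assumes w: "\<And>a a'. a \<in> carrier S \<Longrightarrow> a' \<in> carrier S \<Longrightarrow> cl a = cl a' \<Longrightarrow> w a = w a'"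
    and x: "x \<in> \<Omega>"
  shows "0 \<le> K w x"
proof -
  obtain P \<phi> where m: "Fmor F P \<phi>" and iso: "isotropy S l r x = {(u, \<phi> u) | u. u \<in> P}"
    using gener x unfolding biset_generated_def by blast
  have P: "subgroup P S" by (rule fmor_D(1)[OF fs m])
  have Ps: "P \<subseteq> carrier S" using P by (rule subgroup.subset)
  have "K w x = (\<Sum>st\<in>carrier S \<times> carrier S. if act2 S l r st x = x then w (fst st) * w (snd st) else 0)"
    unfolding K_def by (simp add: sum.cartesian_product split_def)
  also have "\<dots> = (\<Sum>st\<in>isotropy S l r x. w (fst st) * w (snd st))"
    unfolding isotropy_def by (rule sum.inter_filter[symmetric]) (use fin in simp)
  also have "\<dots> = (\<Sum>st\<in>(\<lambda>u. (u, \<phi> u)) ` P. w (fst st) * w (snd st))"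
    unfolding iso by (simp add: setcompr_eq_image)
  also have "\<dots> = (\<Sum>u\<in>P. w u * w (\<phi> u))"
    by (subst sum.reindex) (auto simp: inj_on_def)
  also have "\<dots> = (\<Sum>u\<in>P. w u * w u)"
  proof (rule sum.cong[OF refl])
    fix u assume u: "u \<in> P"
    have "w (\<phi> u) = w u"
      using w[OF fmor_D(2)[OF fs m u] _ cl_fmor[OF m u]] u Ps by blast
    then show "w u * w (\<phi> u) = w u * w u" by simp
  qed
  also have "\<dots> \<ge> 0" by (rule sum_nonneg) simp
  finally show ?thesis .
qed

lemma K_reg: "\<exists>x0\<in>\<Omega>. K w x0 = (\<Sum>a\<in>carrier S. w a * w a)"
proof -
  obtain \<iota> where inj: "inj_on \<iota> (carrier S)" and sub: "\<iota> ` carrier S \<subseteq> \<Omega>"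
    and eq: "\<forall>s \<in> carrier S. \<forall>u \<in> carrier S. \<forall>t \<in> carrier S. \<iota> (s \<otimes> u \<otimes> t) = l s (r (\<iota> u) t)"
    using reg unfolding contains_regular_biset_def by blast
  define x0 where "x0 = \<iota> \<one>"
  have x0: "x0 \<in> \<Omega>" unfolding x0_def using sub by blast
  have fixiff: "act2 S l r (a, b) x0 = x0 \<longleftrightarrow> a = b" if a: "a \<in> carrier S" and b: "b \<in> carrier S" for a b
  proof -
    have "\<iota> (a \<otimes> \<one> \<otimes> inv b) = l a (r (\<iota> \<one>) (inv b))"
      by (rule eq[rule_format]) (use a b in simp_all)
    then have "act2 S l r (a, b) x0 = \<iota> (a \<otimes> \<one> \<otimes> inv b)"
      unfolding act2_def x0_def by simp
    also have "\<dots> = \<iota> (a \<otimes> inv b)" using a b by simp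
    finally have e: "act2 S l r (a, b) x0 = \<iota> (a \<otimes> inv b)" .
    have "\<iota> (a \<otimes> inv b) = \<iota> \<one> \<longleftrightarrow> a \<otimes> inv b = \<one>"
      using inj a b by (simp add: inj_on_eq_iff)
    also have "\<dots> \<longleftrightarrow> a = b"
    proof
      assume h: "a \<otimes> inv b = \<one>"
      have "a = (a \<otimes> inv b) \<otimes> b" using a b by (simp add: m_assoc)
      then show "a = b" using h b by simp
    next
      assume "a = b" then show "a \<otimes> inv b = \<one>" using b by simp
    qed
    finally show ?thesis using e unfolding x0_def by simp
  qed
  have "K w x0 = (\<Sum>a\<in>carrier S. \<Sum>b\<in>carrier S. if a = b then w a * w b else 0)"
    unfolding K_def by (rule sum.cong[OF refl], rule sum.cong[OF refl]) (simp add: fixiff)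
  also have "\<dots> = (\<Sum>a\<in>carrier S. w a * w a)" using fin by simp
  finally show ?thesis using x0 by blast
qed

lemma PSD:
  assumes w: "\<And>a a'. a \<in> carrier S \<Longrightarrow> a' \<in> carrier S \<Longrightarrow> cl a = cl a' \<Longrightarrow> w a = w a'"
  shows "(\<Sum>a\<in>carrier S. w a * w a) \<le> Bf w w"
proof -
  obtain x0 where x0: "x0 \<in> \<Omega>" and k: "K w x0 = (\<Sum>a\<in>carrier S. w a * w a)" using K_reg by blast
  have "K w x0 \<le> (\<Sum>x\<in>\<Omega>. K w x)"
    by (rule member_le_sum[OF x0]) (use K_nonneg[OF w] finO in auto)
  then show ?thesis using k Bf_K by simp
qed

lemma PSD_zero:
  assumes wc: "\<And>a a'. a \<in> carrier S \<Longrightarrow> a' \<in> carrier S \<Longrightarrow> cl a = cl a' \<Longrightarrow> w a = w a'"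
    and z: "Bf w w = 0" and a: "a \<in> carrier S"
  shows "w a = 0"
proof -
  have le: "(\<Sum>a\<in>carrier S. w a * w a) \<le> Bf w w" by (rule PSD[of w, OF wc])
  have nn: "\<And>a. a \<in> carrier S \<Longrightarrow> 0 \<le> w a * w a" by (rule zero_le_square)
  have ge: "0 \<le> (\<Sum>a\<in>carrier S. w a * w a)" by (rule sum_nonneg[OF nn])
  have "(\<Sum>a\<in>carrier S. w a * w a) = 0" using le ge z by linarith
  then have "\<forall>x\<in>carrier S. w x * w x = 0" using sum_nonneg_eq_0_iff[OF fin nn] by simp
  then have "w a * w a = 0" using a by (rule bspec)
  then show ?thesis by simp
qed

end



lemma dep_exists:
  fixes \<alpha> :: "'i \<Rightarrow> 'c \<Rightarrow> rat"
  assumes "finite C"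
  shows "finite R \<Longrightarrow> card C < card R \<Longrightarrow>
    \<exists>y. (\<exists>i\<in>R. y i \<noteq> 0) \<and> (\<forall>c\<in>C. (\<Sum>i\<in>R. y i * \<alpha> i c) = 0)"
  using assms
proof (induction C arbitrary: R \<alpha> rule: finite_induct)
  case empty
  then have "R \<noteq> {}" by auto
  then obtain i where "i \<in> R" by blast
  then show ?case by (intro exI[of _ "\<lambda>_. 1"]) auto
next
  case (insert c C)
  note finR = insert.prems(1)
  have cardC: "card (insert c C) = Suc (card C)" using insert.hyps by simp
  show ?case
  proof (cases "\<forall>i\<in>R. \<alpha> i c = 0")
    case True
    have lt0: "card C < card R" using insert.prems(2) cardC by simp
    obtain y where y: "\<exists>i\<in>R. y i \<noteq> 0" "\<forall>d\<in>C. (\<Sum>i\<in>R. y i * \<alpha> i d) = 0"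
      using insert.IH[of R \<alpha>, OF finR lt0] by blast
    have "(\<Sum>i\<in>R. y i * \<alpha> i c) = 0" using True by simp
    then show ?thesis using y by blast
  next
    case False
    then obtain i0 where i0: "i0 \<in> R" "\<alpha> i0 c \<noteq> 0" by blast
    define R' where "R' = R - {i0}"
    have finR': "finite R'" unfolding R'_def using finR by simp
    have cR': "card R' = card R - 1" unfolding R'_def using i0 finR by simp
    have lt: "card C < card R'" using cR' insert.prems(2) cardC by simp
    define \<alpha>' where "\<alpha>' i d = \<alpha> i d - (\<alpha> i c / \<alpha> i0 c) * \<alpha> i0 d" for i d
    obtain y' where y': "\<exists>i\<in>R'. y' i \<noteq> 0" "\<forall>d\<in>C. (\<Sum>i\<in>R'. y' i * \<alpha>' i d) = 0"
      using insert.IH[OF finR' lt] by blast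
    define s where "s = (\<Sum>j\<in>R'. y' j * \<alpha> j c)"
    define y where "y i = (if i = i0 then - s / \<alpha> i0 c else y' i)" for i
    have nz: "\<exists>i\<in>R. y i \<noteq> 0" using y'(1) unfolding y_def R'_def by auto
    have split: "(\<Sum>i\<in>R. y i * \<alpha> i d) = y i0 * \<alpha> i0 d + (\<Sum>i\<in>R'. y' i * \<alpha> i d)" for d
    proof -
      have "(\<Sum>i\<in>R. y i * \<alpha> i d) = y i0 * \<alpha> i0 d + (\<Sum>i\<in>R'. y i * \<alpha> i d)"
        unfolding R'_def using i0 finR by (simp add: sum.remove)
      also have "(\<Sum>i\<in>R'. y i * \<alpha> i d) = (\<Sum>i\<in>R'. y' i * \<alpha> i d)"
        by (rule sum.cong) (auto simp: y_def R'_def)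
      finally show ?thesis .
    qed
    have "\<forall>d\<in>insert c C. (\<Sum>i\<in>R. y i * \<alpha> i d) = 0"
    proof
      fix d assume d: "d \<in> insert c C"
      show "(\<Sum>i\<in>R. y i * \<alpha> i d) = 0"
      proof (cases "d = c")
        case True
        have "y i0 * \<alpha> i0 c = - s" unfolding y_def using i0 by simp
        then show ?thesis using split[of c] True unfolding s_def by simp
      next
        case False
        then have dC: "d \<in> C" using d by simp
        have "(\<Sum>i\<in>R'. y' i * \<alpha> i d) = (\<Sum>i\<in>R'. y' i * \<alpha>' i d + y' i * \<alpha> i c * (\<alpha> i0 d / \<alpha> i0 c))"
          by (rule sum.cong) (auto simp: \<alpha>'_def algebra_simps)
        also have "\<dots> = (\<Sum>i\<in>R'. y' i * \<alpha>' i d) + s * (\<alpha> i0 d / \<alpha> i0 c)"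
          unfolding s_def by (simp add: sum.distrib sum_distrib_right sum_divide_distrib)
        also have "\<dots> = s * (\<alpha> i0 d / \<alpha> i0 c)" using y'(2) dC by simp
        finally have e: "(\<Sum>i\<in>R'. y' i * \<alpha> i d) = s * (\<alpha> i0 d / \<alpha> i0 c)" .
        have "y i0 * \<alpha> i0 d = - s * (\<alpha> i0 d / \<alpha> i0 c)" unfolding y_def by simp
        then show ?thesis using split[of d] e by simp
      qed
    qed
    then show ?thesis using nz by blast
  qed
qed

lemma tri_a:
  fixes n :: "'c \<Rightarrow> 'c \<Rightarrow> rat" and \<kappa> :: "'c \<Rightarrow> nat"
  assumes finC: "finite C"
    and H1: "\<And>c c'. c \<in> C \<Longrightarrow> c' \<in> C \<Longrightarrow> n c' c \<noteq> 0 \<Longrightarrow> \<kappa> c \<le> \<kappa> c' \<and> (\<kappa> c = \<kappa> c' \<longrightarrow> c = c')"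
    and H2: "\<And>c. c \<in> C \<Longrightarrow> n c c \<noteq> 0"
    and Z: "\<And>c'. c' \<in> C \<Longrightarrow> (\<Sum>c\<in>C. n c' c * y c) = 0"
  shows "\<forall>c\<in>C. y c = 0"
proof (rule ccontr)
  assume "\<not> (\<forall>c\<in>C. y c = 0)"
  define D where "D = {c\<in>C. y c \<noteq> 0}"
  have Dne: "D \<noteq> {}" using \<open>\<not> _\<close> unfolding D_def by blast
  have finD: "finite D" unfolding D_def using finC by simp
  define m where "m = Min (\<kappa> ` D)"
  have "m \<in> \<kappa> ` D" unfolding m_def using finD Dne by simp
  then obtain c0 where c0: "c0 \<in> D" "\<kappa> c0 = m" by blast
  have mn: "\<And>c. c \<in> D \<Longrightarrow> m \<le> \<kappa> c" unfolding m_def using finD by simp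
  have c0C: "c0 \<in> C" and yc0: "y c0 \<noteq> 0" using c0 unfolding D_def by auto
  have "(\<Sum>c\<in>C. n c0 c * y c) = n c0 c0 * y c0 + (\<Sum>c\<in>C - {c0}. n c0 c * y c)"
    using c0C finC by (simp add: sum.remove)
  also have "(\<Sum>c\<in>C - {c0}. n c0 c * y c) = 0"
  proof (rule sum.neutral, rule ballI)
    fix c assume c: "c \<in> C - {c0}"
    show "n c0 c * y c = 0"
    proof (rule ccontr)
      assume "n c0 c * y c \<noteq> 0"
      then have nn: "n c0 c \<noteq> 0" and yc: "y c \<noteq> 0" by auto
      have cD: "c \<in> D" using c yc unfolding D_def by simp
      have "\<kappa> c \<le> \<kappa> c0 \<and> (\<kappa> c = \<kappa> c0 \<longrightarrow> c = c0)" using H1[OF _ c0C nn] c by simp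
      moreover have "\<kappa> c0 \<le> \<kappa> c" using mn[OF cD] c0 by simp
      ultimately show False using c by (metis DiffE le_antisym singletonI)
    qed
  qed
  finally have "n c0 c0 * y c0 = 0" using Z[OF c0C] by simp
  then show False using H2[OF c0C] yc0 by simp
qed

lemma tri_b:
  fixes n :: "'c \<Rightarrow> 'c \<Rightarrow> rat" and \<kappa> :: "'c \<Rightarrow> nat"
  assumes finC: "finite C"
    and H1: "\<And>c c'. c \<in> C \<Longrightarrow> c' \<in> C \<Longrightarrow> n c' c \<noteq> 0 \<Longrightarrow> \<kappa> c \<le> \<kappa> c' \<and> (\<kappa> c = \<kappa> c' \<longrightarrow> c = c')"
    and H2: "\<And>c. c \<in> C \<Longrightarrow> n c c \<noteq> 0"
    and Z: "\<And>c. c \<in> C \<Longrightarrow> (\<Sum>c'\<in>C. x c' * n c' c) = 0"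
  shows "\<forall>c\<in>C. x c = 0"
proof (rule ccontr)
  assume "\<not> (\<forall>c\<in>C. x c = 0)"
  define D where "D = {c\<in>C. x c \<noteq> 0}"
  have Dne: "D \<noteq> {}" using \<open>\<not> _\<close> unfolding D_def by blast
  have finD: "finite D" unfolding D_def using finC by simp
  define m where "m = Max (\<kappa> ` D)"
  have "m \<in> \<kappa> ` D" unfolding m_def using finD Dne by simp
  then obtain c0 where c0: "c0 \<in> D" "\<kappa> c0 = m" by blast
  have mx: "\<And>c. c \<in> D \<Longrightarrow> \<kappa> c \<le> m" unfolding m_def using finD by simp
  have c0C: "c0 \<in> C" and xc0: "x c0 \<noteq> 0" using c0 unfolding D_def by auto
  have "(\<Sum>c\<in>C. x c * n c c0) = x c0 * n c0 c0 + (\<Sum>c\<in>C - {c0}. x c * n c c0)"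
    using c0C finC by (simp add: sum.remove)
  also have "(\<Sum>c\<in>C - {c0}. x c * n c c0) = 0"
  proof (rule sum.neutral, rule ballI)
    fix c assume c: "c \<in> C - {c0}"
    show "x c * n c c0 = 0"
    proof (rule ccontr)
      assume "x c * n c c0 \<noteq> 0"
      then have nn: "n c c0 \<noteq> 0" and xc: "x c \<noteq> 0" by auto
      have cD: "c \<in> D" using c xc unfolding D_def by simp
      have "\<kappa> c0 \<le> \<kappa> c \<and> (\<kappa> c0 = \<kappa> c \<longrightarrow> c0 = c)" using H1[OF c0C _ nn] c by simp
      moreover have "\<kappa> c \<le> \<kappa> c0" using mx[OF cD] c0 by simp
      ultimately show False using c by (metis DiffE le_antisym singletonI)
    qed
  qed
  finally have "x c0 * n c0 c0 = 0" using Z[OF c0C] by simp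
  then show False using H2[OF c0C] xc0 by simp
qed




context ctx begin

definition repr where "repr A = (SOME P. P \<in> A)"

lemma repr: assumes A: "A \<in> F_classes S F"
  shows "subgroup (repr A) S" "F_class F (repr A) = A" "repr A \<in> A"
proof -
  obtain P0 where P0: "subgroup P0 S" "A = F_class F P0" using A unfolding F_classes_def by blast
  have "P0 \<in> A" using P0 F_class_self by simp
  then have rA: "repr A \<in> A" unfolding repr_def by (rule someI)
  then have c: "F_conj F P0 (repr A)" using P0(2) F_class_mem by simp
  show "subgroup (repr A) S" by (rule fconj_subgroup(2)[OF c])
  show "F_class F (repr A) = A" using F_class_eq[OF c] P0(2) by simp
  show "repr A \<in> A" by (rule rA)
qed

lemma F_class_sub: "F_class F P \<subseteq> Pow (carrier S)"
proof
  fix Q assume "Q \<in> F_class F P"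
  then have "F_conj F P Q" by (simp add: F_class_mem)
  then have "subgroup Q S" by (rule fconj_subgroup(2))
  then show "Q \<in> Pow (carrier S)" using subgroup.subset by blast
qed

lemma finI: "finite (F_classes S F)"
proof -
  have "F_classes S F \<subseteq> Pow (Pow (carrier S))" unfolding F_classes_def using F_class_sub by blast
  then show ?thesis by (rule finite_subset) (simp add: fin)
qed

lemma CC_eq: "F_cyclic_classes S F = CC"
  unfolding F_cyclic_classes_def CC_def cl_def cyclic_subgroup_def using gen_sub by blast

lemma CC_sub: "CC \<subseteq> F_classes S F"
  unfolding CC_def cl_def F_classes_def using gen_sub by blast

lemma card_sub_pos: "subgroup P S \<Longrightarrow> card P > 0"
proof -
  assume P: "subgroup P S"
  have "\<one> \<in> P" using P by (rule subgroup.one_closed)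
  moreover have "finite P" using P fin subgroup.subset finite_subset by metis
  ultimately show ?thesis using card_gt_0_iff by blast
qed

lemma sum_ind: "finite Y0 \<Longrightarrow> (\<Sum>b\<in>Y0. ind P b) = of_nat (card (Y0 \<inter> P))"
proof -
  assume Y0: "finite Y0"
  have "(\<Sum>b\<in>Y0. ind P b) = (\<Sum>b\<in>Y0. if b \<in> P then 1 else 0)" unfolding ind_def by simp
  also have "\<dots> = (\<Sum>b\<in>{b\<in>Y0. b \<in> P}. 1)" by (rule sum.inter_filter[OF Y0, symmetric])
  also have "{b\<in>Y0. b \<in> P} = Y0 \<inter> P" by blast
  finally show ?thesis by simp
qed

lemma sum_if_sub: "finite A \<Longrightarrow> B \<subseteq> A \<Longrightarrow> (\<Sum>x\<in>A. if x \<in> B then g x else 0) = sum g B"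
  by (simp add: sum.If_cases Int_absorb1 Int_absorb2)

lemma Bf_ind: assumes P: "subgroup P S" and Q: "subgroup Q S"
  shows "Bf (ind P) (ind Q) = (\<Sum>a\<in>P. \<Sum>b\<in>Q. of_nat (fx a b))"
proof -
  have Ps: "P \<subseteq> carrier S" using P by (rule subgroup.subset)
  have Qs: "Q \<subseteq> carrier S" using Q by (rule subgroup.subset)
  have inner: "(\<Sum>b\<in>carrier S. ind P a * ind Q b * of_nat (fx a b)) =
      (if a \<in> P then (\<Sum>b\<in>Q. of_nat (fx a b)) else 0)" for a
  proof -
    have "(\<Sum>b\<in>carrier S. ind P a * ind Q b * of_nat (fx a b)) =
        ind P a * (\<Sum>b\<in>carrier S. ind Q b * of_nat (fx a b))"
      by (simp add: sum_distrib_left mult.assoc)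
    also have "(\<Sum>b\<in>carrier S. ind Q b * of_nat (fx a b)) = (\<Sum>b\<in>carrier S. if b \<in> Q then of_nat (fx a b) else 0)"
      by (rule sum.cong) (simp_all add: ind_def)
    also have "(\<Sum>b\<in>carrier S. if b \<in> Q then of_nat (fx a b) else 0) = (\<Sum>b\<in>Q. (of_nat (fx a b)::rat))"
      by (rule sum_if_sub[OF fin Qs])
    finally show ?thesis unfolding ind_def by simp
  qed
  have "Bf (ind P) (ind Q) = (\<Sum>a\<in>carrier S. if a \<in> P then (\<Sum>b\<in>Q. of_nat (fx a b)) else 0)"
    unfolding Bf_def inner by simp
  also have "\<dots> = (\<Sum>a\<in>P. \<Sum>b\<in>Q. of_nat (fx a b))"
    by (rule sum_if_sub[OF fin Ps])
  finally show ?thesis .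
qed

lemma num_formula: assumes P: "subgroup P S" and Q: "subgroup Q S"
  shows "(of_nat (num_orbits l r \<Omega> P Q) :: rat) = Bf (ind P) (ind Q) / (of_nat (card P) * of_nat (card Q))"
proof -
  have e: "num_orbits l r \<Omega> P Q * (card P * card Q) = (\<Sum>a\<in>P. \<Sum>b\<in>Q. fx a b)"
    by (rule burnside_link[OF P Q])
  have "(of_nat (num_orbits l r \<Omega> P Q) :: rat) * (of_nat (card P) * of_nat (card Q)) = Bf (ind P) (ind Q)"
    unfolding Bf_ind[OF P Q] using arg_cong[OF e, of "of_nat :: nat \<Rightarrow> rat"] by simp
  moreover have "(of_nat (card P) * of_nat (card Q) :: rat) \<noteq> 0"
    using card_sub_pos[OF P] card_sub_pos[OF Q] by simp
  ultimately show ?thesis by (simp add: field_simps)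
qed

lemma MB: assumes A: "A \<in> F_classes S F" and B: "B \<in> F_classes S F"
  shows "orbit_matrix l r \<Omega> A B = Bf (ind (repr A)) (ind (repr B)) / (of_nat (card (repr A)) * of_nat (card (repr B)))"
  unfolding orbit_matrix_def repr_def[symmetric] by (rule num_formula[OF repr(1)[OF A] repr(1)[OF B]])

end



context ctx begin

definition al where "al A c = (\<Sum>a\<in>T c. ind (repr A) a) / of_nat (card (repr A))"
definition V where "V c B = Bl (rep c) (ind (repr B)) / of_nat (card (repr B))"

lemma row_decomp: assumes A: "A \<in> F_classes S F" and B: "B \<in> F_classes S F"
  shows "orbit_matrix l r \<Omega> A B = (\<Sum>c\<in>CC. al A c * V c B)"
proof -
  have v: "PI (ind (repr B))" by (rule PI_ind[OF repr(1)[OF B]])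
  have "orbit_matrix l r \<Omega> A B =
      (\<Sum>c\<in>CC. (\<Sum>a\<in>T c. ind (repr A) a) * Bl (rep c) (ind (repr B))) / (of_nat (card (repr A)) * of_nat (card (repr B)))"
    unfolding MB[OF A B] GL[OF v] ..
  also have "\<dots> = (\<Sum>c\<in>CC. (\<Sum>a\<in>T c. ind (repr A) a) * Bl (rep c) (ind (repr B)) / (of_nat (card (repr A)) * of_nat (card (repr B))))"
    by (rule sum_divide_distrib)
  also have "\<dots> = (\<Sum>c\<in>CC. al A c * V c B)"
    unfolding al_def V_def by (rule sum.cong[OF refl]) simp
  finally show ?thesis .
qed

lemma upper: assumes R: "R \<subseteq> F_classes S F" and ind: "rows_lin_indep R (F_classes S F) (orbit_matrix l r \<Omega>)"
  shows "card R \<le> card CC"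
proof (rule ccontr)
  assume "\<not> card R \<le> card CC"
  then have lt: "card CC < card R" by simp
  have finR: "finite R" using R finI by (rule finite_subset)
  obtain y where y: "\<exists>i\<in>R. y i \<noteq> 0" "\<forall>c\<in>CC. (\<Sum>i\<in>R. y i * al i c) = 0"
    using dep_exists[OF finCC finR lt, of al] by blast
  have "\<forall>j\<in>F_classes S F. (\<Sum>i\<in>R. y i * orbit_matrix l r \<Omega> i j) = 0"
  proof
    fix j assume j: "j \<in> F_classes S F"
    have "(\<Sum>i\<in>R. y i * orbit_matrix l r \<Omega> i j) = (\<Sum>i\<in>R. y i * (\<Sum>c\<in>CC. al i c * V c j))"
    proof (rule sum.cong[OF refl])
      fix i assume "i \<in> R"
      then have i: "i \<in> F_classes S F" using R by blast
      show "y i * orbit_matrix l r \<Omega> i j = y i * (\<Sum>c\<in>CC. al i c * V c j)"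
        by (simp only: row_decomp[OF i j])
    qed
    also have "\<dots> = (\<Sum>i\<in>R. \<Sum>c\<in>CC. y i * al i c * V c j)"
      by (simp add: sum_distrib_left mult.assoc)
    also have "\<dots> = (\<Sum>c\<in>CC. \<Sum>i\<in>R. y i * al i c * V c j)" by (rule sum.swap)
    also have "\<dots> = (\<Sum>c\<in>CC. (\<Sum>i\<in>R. y i * al i c) * V c j)" by (simp add: sum_distrib_right)
    also have "\<dots> = 0" using y(2) by simp
    finally show "(\<Sum>i\<in>R. y i * orbit_matrix l r \<Omega> i j) = 0" .
  qed
  moreover have "(\<forall>j\<in>F_classes S F. (\<Sum>i\<in>R. y i * orbit_matrix l r \<Omega> i j) = 0) \<longrightarrow> (\<forall>i\<in>R. y i = 0)"
    using ind unfolding rows_lin_indep_def by (rule spec)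
  ultimately have "\<forall>i\<in>R. y i = 0" by (rule rev_mp)
  then show False using y(1) by blast
qed

end



context ctx begin

definition nn :: "'a set set \<Rightarrow> 'a set set \<Rightarrow> rat" where
  "nn c' c = of_nat (card (T c \<inter> repr c'))"
definition \<kappa> where "\<kappa> c = card (repr c)"

lemma finT: "finite (T c)" unfolding T_def using fin by simp

lemma tri_H1: assumes c: "c \<in> CC" and c': "c' \<in> CC" and n: "nn c' c \<noteq> 0"
  shows "\<kappa> c \<le> \<kappa> c' \<and> (\<kappa> c = \<kappa> c' \<longrightarrow> c = c')"
proof -
  have "card (T c \<inter> repr c') \<noteq> 0" using n unfolding nn_def by simp
  then have "T c \<inter> repr c' \<noteq> {}" by (metis card.empty)
  then obtain b where b: "b \<in> carrier S" "cl b = c" "b \<in> repr c'" unfolding T_def by blast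
  have cI: "c \<in> F_classes S F" and c'I: "c' \<in> F_classes S F" using c c' CC_sub by blast+
  note P = repr[OF cI] and P' = repr[OF c'I]
  have gsub: "generate S {b} \<subseteq> repr c'" by (rule gen_in[OF P'(1) b(3)])
  have "F_class F (generate S {b}) = F_class F (repr c)" using b(2) P(2) unfolding cl_def by simp
  then have "F_conj F (generate S {b}) (repr c)" using F_class_eq_iff[OF gen_sub[OF b(1)] P(1)] by simp
  then have cg: "card (generate S {b}) = card (repr c)" by (rule fconj_card)
  have finP': "finite (repr c')" using P'(1) fin subgroup.subset finite_subset by metis
  have le: "card (generate S {b}) \<le> card (repr c')" by (rule card_mono[OF finP' gsub])
  have "c = c'" if eq: "\<kappa> c = \<kappa> c'"
  proof -
    have "card (generate S {b}) = card (repr c')" using cg eq unfolding \<kappa>_def by simp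
    then have "generate S {b} = repr c'" using card_subset_eq[OF finP' gsub] by simp
    then show "c = c'" using b(2) P'(2) unfolding cl_def by simp
  qed
  then show ?thesis using le cg unfolding \<kappa>_def by simp
qed

lemma tri_H2: assumes c: "c \<in> CC" shows "nn c c \<noteq> 0"
proof -
  obtain a0 where a0: "a0 \<in> carrier S" "c = cl a0" using c unfolding CC_def by blast
  have cI: "c \<in> F_classes S F" using c CC_sub by blast
  note P = repr[OF cI]
  have "repr c \<in> F_class F (generate S {a0})" using P(3) a0(2) unfolding cl_def by simp
  then have "F_conj F (generate S {a0}) (repr c)" by (simp add: F_class_mem)
  then obtain \<phi> where m: "Fmor F (generate S {a0}) \<phi>" and im: "\<phi> ` generate S {a0} = repr c"
    unfolding F_conj_def by blast
  have aa: "a0 \<in> generate S {a0}" by (rule gen_self[OF a0(1)])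
  define b where "b = \<phi> a0"
  have b: "b \<in> carrier S" unfolding b_def by (rule fmor_D(2)[OF fs m aa])
  have gb: "generate S {b} = repr c" using gen_img[OF m aa] im unfolding b_def by simp
  have bP: "b \<in> repr c" using gen_self[OF b] gb by simp
  have clb: "cl b = c" unfolding cl_def using gb P(2) by simp
  have "b \<in> T c \<inter> repr c" using b bP clb unfolding T_def by simp
  moreover have "finite (T c \<inter> repr c)" using finT by simp
  ultimately have "card (T c \<inter> repr c) \<noteq> 0" by (metis card_0_eq empty_iff)
  then show ?thesis unfolding nn_def by simp
qed

lemma Bf_lin: assumes finY: "finite Y0"
  shows "Bf (\<lambda>a. \<Sum>A\<in>Y0. c A * f A a) v = (\<Sum>A\<in>Y0. c A * Bf (f A) v)"
proof -
  have "Bf (\<lambda>a. \<Sum>A\<in>Y0. c A * f A a) v =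
      (\<Sum>a\<in>carrier S. \<Sum>b\<in>carrier S. \<Sum>A\<in>Y0. c A * (f A a * v b * of_nat (fx a b)))"
    unfolding Bf_def by (rule sum.cong[OF refl], rule sum.cong[OF refl]) (simp add: sum_distrib_right mult.assoc)
  also have "\<dots> = (\<Sum>a\<in>carrier S. \<Sum>A\<in>Y0. \<Sum>b\<in>carrier S. c A * (f A a * v b * of_nat (fx a b)))"
    by (rule sum.cong[OF refl], rule sum.swap)
  also have "\<dots> = (\<Sum>A\<in>Y0. \<Sum>a\<in>carrier S. \<Sum>b\<in>carrier S. c A * (f A a * v b * of_nat (fx a b)))"
    by (rule sum.swap)
  also have "\<dots> = (\<Sum>A\<in>Y0. c A * Bf (f A) v)"
    unfolding Bf_def by (simp add: sum_distrib_left)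
  finally show ?thesis .
qed

lemma lower: "rows_lin_indep CC (F_classes S F) (orbit_matrix l r \<Omega>)"
  unfolding rows_lin_indep_def
proof (intro allI impI)
  fix x assume Z: "\<forall>j\<in>F_classes S F. (\<Sum>i\<in>CC. x i * orbit_matrix l r \<Omega> i j) = 0"
  have CCI: "\<And>A. A \<in> CC \<Longrightarrow> A \<in> F_classes S F" using CC_sub by blast
  define cA where "cA (A::'a set set) = (of_nat (card (repr A)) :: rat)" for A
  have cA0: "\<And>A. A \<in> F_classes S F \<Longrightarrow> cA A \<noteq> 0"
    unfolding cA_def using card_sub_pos repr(1) by (metis of_nat_0_eq_iff not_less0 gr_zeroI)
  define u where "u a = (\<Sum>A\<in>CC. (x A / cA A) * ind (repr A) a)" for a
  have PIu: "PI u" unfolding u_def by (rule PI_sum) (rule PI_ind[OF repr(1)[OF CCI]])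
  have lin: "Bf u v = (\<Sum>A\<in>CC. (x A / cA A) * Bf (ind (repr A)) v)" for v
    unfolding u_def by (rule Bf_lin[OF finCC])
  have Bz: "Bf u (ind (repr B)) = 0" if B: "B \<in> F_classes S F" for B
  proof -
    have "Bf u (ind (repr B)) = (\<Sum>A\<in>CC. cA B * (x A * orbit_matrix l r \<Omega> A B))"
    proof (simp only: lin, rule sum.cong[OF refl])
      fix A assume A: "A \<in> CC"
      show "x A / cA A * Bf (ind (repr A)) (ind (repr B)) = cA B * (x A * orbit_matrix l r \<Omega> A B)"
        unfolding MB[OF CCI[OF A] B] cA_def[symmetric] using cA0[OF CCI[OF A]] cA0[OF B]
        by (simp add: field_simps)
    qed
    also have "\<dots> = cA B * (\<Sum>A\<in>CC. x A * orbit_matrix l r \<Omega> A B)" by (simp add: sum_distrib_left)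
    also have "\<dots> = 0" using Z B by simp
    finally show ?thesis .
  qed
  have Brz: "\<forall>c\<in>CC. Br u (rep c) = 0"
  proof (rule tri_a[OF finCC, of nn \<kappa>])
    show "\<And>c c'. c \<in> CC \<Longrightarrow> c' \<in> CC \<Longrightarrow> nn c' c \<noteq> 0 \<Longrightarrow> \<kappa> c \<le> \<kappa> c' \<and> (\<kappa> c = \<kappa> c' \<longrightarrow> c = c')"
      by (rule tri_H1)
    show "\<And>c. c \<in> CC \<Longrightarrow> nn c c \<noteq> 0" by (rule tri_H2)
    fix c' assume c': "c' \<in> CC"
    have "0 = Bf u (ind (repr c'))" using Bz[OF CCI[OF c']] by simp
    also have "\<dots> = (\<Sum>c\<in>CC. (\<Sum>b\<in>T c. ind (repr c') b) * Br u (rep c))" by (rule GR[OF PIu])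
    also have "\<dots> = (\<Sum>c\<in>CC. nn c' c * Br u (rep c))"
      unfolding nn_def by (rule sum.cong[OF refl]) (simp add: sum_ind[OF finT])
    finally show "(\<Sum>c\<in>CC. nn c' c * Br u (rep c)) = 0" by simp
  qed
  have Brz2: "Br u b = 0" if b: "b \<in> carrier S" for b
  proof -
    have cb: "cl b \<in> CC" unfolding CC_def using b by blast
    have "Br u (rep (cl b)) = Br u b"
      by (rule Br_cl[OF PIu b rep(1)[OF cb]]) (simp add: rep(2)[OF cb])
    then show ?thesis using Brz cb by simp
  qed
  have Bfu: "Bf u v = 0" for v unfolding Bf_r using Brz2 by simp
  define w where "w a = (\<Sum>a'\<in>T (cl a). u a') / of_nat (card (T (cl a)))" for a
  have wc: "\<And>a a'. a \<in> carrier S \<Longrightarrow> a' \<in> carrier S \<Longrightarrow> cl a = cl a' \<Longrightarrow> w a = w a'"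
    unfolding w_def by simp
  have PIw: "PI w" by (rule PI_cl[OF wc])
  have cardT: "card (T c) \<noteq> 0" if c: "c \<in> CC" for c
  proof -
    have "rep c \<in> T c" unfolding T_def using rep[OF c] by simp
    then show ?thesis using finT by (metis card_0_eq empty_iff)
  qed
  have sumT: "(\<Sum>a\<in>T c. w a) = (\<Sum>a\<in>T c. u a)" if c: "c \<in> CC" for c
  proof -
    have "(\<Sum>a\<in>T c. w a) = (\<Sum>a\<in>T c. (\<Sum>a'\<in>T c. u a') / of_nat (card (T c)))"
      unfolding w_def by (rule sum.cong[OF refl]) (simp add: T_def)
    also have "\<dots> = (\<Sum>a'\<in>T c. u a')" using cardT[OF c] by simp
    finally show ?thesis .
  qed
  have "Bf w w = (\<Sum>c\<in>CC. (\<Sum>a\<in>T c. w a) * Bl (rep c) w)" by (rule GL[OF PIw])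
  also have "\<dots> = (\<Sum>c\<in>CC. (\<Sum>a\<in>T c. u a) * Bl (rep c) w)" by (rule sum.cong[OF refl]) (simp add: sumT)
  also have "\<dots> = Bf u w" by (rule GL[OF PIw, symmetric])
  also have "\<dots> = 0" by (rule Bfu)
  finally have Bww: "Bf w w = 0" .
  have s0: "(\<Sum>a\<in>T c. u a) = 0" if c: "c \<in> CC" for c
  proof -
    have "w (rep c) = 0" by (rule PSD_zero[OF wc Bww rep(1)[OF c]])
    then have "(\<Sum>a'\<in>T c. u a') / of_nat (card (T c)) = 0" unfolding w_def using rep(2)[OF c] by simp
    then show ?thesis using cardT[OF c] by simp
  qed
  have xz: "\<forall>A\<in>CC. x A / cA A = 0"
  proof (rule tri_b[OF finCC, of nn \<kappa>])
    show "\<And>c c'. c \<in> CC \<Longrightarrow> c' \<in> CC \<Longrightarrow> nn c' c \<noteq> 0 \<Longrightarrow> \<kappa> c \<le> \<kappa> c' \<and> (\<kappa> c = \<kappa> c' \<longrightarrow> c = c')"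
      by (rule tri_H1)
    show "\<And>c. c \<in> CC \<Longrightarrow> nn c c \<noteq> 0" by (rule tri_H2)
    fix c assume c: "c \<in> CC"
    have "0 = (\<Sum>a\<in>T c. u a)" using s0[OF c] by simp
    also have "\<dots> = (\<Sum>a\<in>T c. \<Sum>A\<in>CC. x A / cA A * ind (repr A) a)" unfolding u_def ..
    also have "\<dots> = (\<Sum>A\<in>CC. \<Sum>a\<in>T c. x A / cA A * ind (repr A) a)" by (rule sum.swap)
    also have "\<dots> = (\<Sum>A\<in>CC. x A / cA A * nn A c)"
      unfolding nn_def by (rule sum.cong[OF refl]) (simp only: sum_distrib_left[symmetric] sum_ind[OF finT])
    finally show "(\<Sum>A\<in>CC. x A / cA A * nn A c) = 0" by simp
  qed
  show "\<forall>i\<in>CC. x i = 0" using xz cA0 CCI by simp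
qed

lemma main: "mat_rank (F_classes S F) (F_classes S F) (orbit_matrix l r \<Omega>) = card CC"
  unfolding mat_rank_def
proof (rule Max_eqI)
  show "finite {card R |R. R \<subseteq> F_classes S F \<and> rows_lin_indep R (F_classes S F) (orbit_matrix l r \<Omega>)}"
    by (rule finite_subset[of _ "{..card CC}"]) (use upper in auto)
  show "\<And>y. y \<in> {card R |R. R \<subseteq> F_classes S F \<and> rows_lin_indep R (F_classes S F) (orbit_matrix l r \<Omega>)} \<Longrightarrow> y \<le> card CC"
    using upper by blast
  show "card CC \<in> {card R |R. R \<subseteq> F_classes S F \<and> rows_lin_indep R (F_classes S F) (orbit_matrix l r \<Omega>)}"
    using CC_sub lower by blast
qed

end


theorem proposition3p1:
  fixes p :: nat and S :: "('a, 'b) monoid_scheme"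
    and F :: "('a set \<times> ('a \<Rightarrow> 'a)) set"
    and \<Omega> :: "'c set" and l :: "'a \<Rightarrow> 'c \<Rightarrow> 'c" and r :: "'c \<Rightarrow> 'a \<Rightarrow> 'c"
  assumes "Factorial_Ring.prime p"
    and "group S" and "finite (carrier S)" and "\<exists>n. card (carrier S) = p ^ n"
    and "saturated_fusion_system p S F"
    and "finite \<Omega>" and "biset S \<Omega> l r"
    and "biset_stable S F \<Omega> l r" and "biset_generated S F \<Omega> l r"
    and "contains_regular_biset S \<Omega> l r"
  shows "mat_rank (F_classes S F) (F_classes S F) (orbit_matrix l r \<Omega>)
           = card (F_cyclic_classes S F)"
proof -
  have fsys: "fusion_system S F" using assms(5) unfolding saturated_fusion_system_def by (rule conjunct1)
  interpret ctx S F p \<Omega> l r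
    by (rule ctx.intro[OF fus.intro[OF assms(2) fus_axioms.intro[OF fsys]]], rule ctx_axioms.intro)
       (rule assms)+
  show ?thesis using main CC_eq by simp
qed

end
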